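(* Let $X$ be a Hilbert space and let $T:X\rightrightarrows X$ be a proper set-valued mapping whose graph $\operatorname{gph}T$ is closed in the norm topology of $X\times X$. Then the following are equivalent: (i) $T$ is maximal monotone on $X$; (ii) $T$ is hypomonotone on $X$ and for every $(u,v)\in\operatorname{gph}T$ one has $\langle z,w\rangle\ge 0$ whenever $w\in X$ and $z\in\widehat D^*T(u,v)(w)$.
   Context: $X$ is a real Hilbert space identified with its dual, with inner product $\langle\cdot,\cdot\rangle$ and norm $\|\cdot\|$. A set-valued mapping $T:X\rightrightarrows X$ has domain $\operatorname{dom}T=\{u: T(u)\neq\emptyset\}$ and graph $\operatorname{gph}T=\{(u,v): v\in T(u)\}$; $T$ is proper if $\operatorname{dom}T\neq\emptyset$. $T$ is monotone if $\langle v_1-v_2,u_1-u_2\rangle\ge0$ for all $(u_1,v_1),(u_2,v_2)\in\operatorname{gph}T$; maximal monotone if it is monotone and $\operatorname{gph}T=\operatorname{gph}S$ for every monotone $S$ with $\operatorname{gph}T\subset\operatorname{gph}S$. $T$ is hypomonotone on $X$ if there is $r>0$ with $\langle v_1-v_2,u_1-u_2\rangle\ge -r\|u_1-u_2\|^2$ for all $(u_1,v_1),(u_2,v_2)\in\operatorname{gph}T$. For a set $\Omega\subset X\times X$ and $\bar p\in\Omega$, the regular (Fréchet) normal cone is $\widehat N(\bar p;\Omega)=\{q: \limsup_{p\to\bar p,\,p\in\Omega}\frac{\langle q,p-\bar p\rangle}{\|p-\bar p\|}\le 0\}$. The regular coderivative of $T$ at $(u,v)\in\operatorname{gph}T$ is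 $\widehat D^*T(u,v)(w)=\{z\in X: (z,-w)\in\widehat N((u,v);\operatorname{gph}T)\}$ for $w\in X$. *)

theory Defs
  imports "HOL-Analysis.Analysis"
begin

text \<open>The product X \<times> X carries the library's inner product
  inner (a,b) (c,d) = inner a c + inner b d and its induced (product) norm.\<close>

definition gph :: "('a \<Rightarrow> 'b set) \<Rightarrow> ('a \<times> 'b) set" where
  "gph T = {(u, v). v \<in> T u}"

definition dom_sv :: "('a \<Rightarrow> 'b set) \<Rightarrow> 'a set" where
  "dom_sv T = {u. T u \<noteq> {}}"

definition proper_sv :: "('a \<Rightarrow> 'b set) \<Rightarrow> bool" where
  "proper_sv T \<longleftrightarrow> dom_sv T \<noteq> {}"

definition monotone_sv :: "('a::real_inner \<Rightarrow> 'a set) \<Rightarrow> bool" where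
  "monotone_sv T \<longleftrightarrow>
     (\<forall>u1 v1 u2 v2. (u1, v1) \<in> gph T \<longrightarrow> (u2, v2) \<in> gph T \<longrightarrow>
        inner (v1 - v2) (u1 - u2) \<ge> 0)"

definition maximal_monotone :: "('a::real_inner \<Rightarrow> 'a set) \<Rightarrow> bool" where
  "maximal_monotone T \<longleftrightarrow> monotone_sv T \<and>
     (\<forall>S. monotone_sv S \<and> gph T \<subseteq> gph S \<longrightarrow> gph T = gph S)"

definition hypomonotone :: "('a::real_inner \<Rightarrow> 'a set) \<Rightarrow> bool" where
  "hypomonotone T \<longleftrightarrow> (\<exists>r>0.
     \<forall>u1 v1 u2 v2. (u1, v1) \<in> gph T \<longrightarrow> (u2, v2) \<in> gph T \<longrightarrow>
        inner (v1 - v2) (u1 - u2) \<ge> - r * (norm (u1 - u2))\<^sup>2)"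

definition regular_normal_cone :: "'b::real_inner \<Rightarrow> 'b set \<Rightarrow> 'b set" where
  "regular_normal_cone pbar \<Omega> =
     {q. Limsup (at pbar within \<Omega>)
           (\<lambda>p. ereal (inner q (p - pbar) / norm (p - pbar))) \<le> 0}"

definition regular_coderivative ::
  "('a::real_inner \<Rightarrow> 'a set) \<Rightarrow> 'a \<times> 'a \<Rightarrow> 'a \<Rightarrow> 'a set" where
  "regular_coderivative T uv w = {z. (z, - w) \<in> regular_normal_cone uv (gph T)}"

end

theory Submission
  imports Defs
begin


lemma normal_of_quadratic:
  fixes q pbar :: "'b::real_inner"
  assumes "\<And>p. p \<in> \<Omega> \<Longrightarrow> inner q (p - pbar) \<le> C * (norm (p - pbar))^2"
  shows "q \<in> regular_normal_cone pbar \<Omega>"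
proof -
  let ?F = "at pbar within \<Omega>"
  let ?f = "\<lambda>p. ereal (inner q (p - pbar) / norm (p - pbar))"
  let ?g = "\<lambda>p. ereal (C * norm (p - pbar))"
  have ev: "eventually (\<lambda>p. ?f p \<le> ?g p) ?F"
    unfolding eventually_at_filter
  proof (intro always_eventually allI impI)
    fix p assume "p \<noteq> pbar" "p \<in> \<Omega>"
    then have n: "norm (p - pbar) > 0" by simp
    have "inner q (p - pbar) \<le> C * norm (p - pbar) * norm (p - pbar)"
      using assms[OF \<open>p \<in> \<Omega>\<close>] by (simp add: power2_eq_square mult.assoc)
    then show "?f p \<le> ?g p" using n by (simp add: divide_le_eq)
  qed
  have lim: "(?g \<longlongrightarrow> ereal 0) ?F"
  proof -
    have "((\<lambda>p. C * norm (p - pbar)) \<longlongrightarrow> C * norm (pbar - pbar)) ?F"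
      by (intro tendsto_intros)
    then show ?thesis by (intro tendsto_intros) simp
  qed
  show ?thesis
  proof (cases "?F = bot")
    case True thus ?thesis by (simp add: regular_normal_cone_def)
  next
    case False
    have "Limsup ?F ?f \<le> Limsup ?F ?g" by (rule Limsup_mono[OF ev])
    also have "\<dots> = 0" using lim_imp_Limsup[OF False lim] by (simp add: zero_ereal_def)
    finally show ?thesis by (simp add: regular_normal_cone_def)
  qed
qed

lemma normal_eps:
  fixes q pbar :: "'b::real_inner"
  assumes "q \<in> regular_normal_cone pbar \<Omega>" "e > 0"
  shows "\<exists>d>0. \<forall>p\<in>\<Omega>. p \<noteq> pbar \<and> dist p pbar < d \<longrightarrow> inner q (p - pbar) \<le> e * norm (p - pbar)"
proof -
  let ?f = "\<lambda>p. ereal (inner q (p - pbar) / norm (p - pbar))"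
  have "Limsup (at pbar within \<Omega>) ?f < ereal e"
    using assms unfolding regular_normal_cone_def by (auto intro: le_less_trans)
  from Limsup_lessD[OF this] have "eventually (\<lambda>p. ?f p < ereal e) (at pbar within \<Omega>)" .
  then obtain d where d: "d > 0" "\<And>p. p \<in> \<Omega> \<Longrightarrow> p \<noteq> pbar \<Longrightarrow> dist p pbar < d \<Longrightarrow> ?f p < ereal e"
    unfolding eventually_at by blast
  show ?thesis
  proof (intro exI[of _ d] conjI ballI impI)
    fix p assume "p \<in> \<Omega>" "p \<noteq> pbar \<and> dist p pbar < d"
    then have "inner q (p - pbar) / norm (p - pbar) < e" "norm (p - pbar) > 0" using d by auto
    then show "inner q (p - pbar) \<le> e * norm (p - pbar)" by (simp add: divide_less_eq)
  qed (use d in auto)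
qed



lemma near_min_exists:
  fixes h :: "'a \<Rightarrow> real"
  assumes "y \<in> D" "\<And>w. w \<in> D \<Longrightarrow> m \<le> h w" "e > 0"
  shows "\<exists>z\<in>D. h z \<le> h y \<and> (\<forall>w\<in>D. h z \<le> h w + e)"
proof -
  let ?I = "Inf (h ` D)"
  have bdd: "bdd_below (h ` D)" using assms(2) by (meson bdd_belowI2)
  have le: "\<And>w. w \<in> D \<Longrightarrow> ?I \<le> h w" using bdd by (auto intro: cInf_lower)
  show ?thesis
  proof (cases "h y \<le> ?I + e")
    case True thus ?thesis using assms(1) le by (intro bexI[of _ y]) force+
  next
    case False
    have "?I < ?I + e" using assms(3) by simp
    then obtain w0 where "w0 \<in> D" "h w0 < ?I + e"
      using cInf_lessD[of "h ` D" "?I + e"] assms(1) by auto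
    thus ?thesis using False le by (intro bexI[of _ w0]) force+
  qed
qed

primrec vpseq :: "('a::real_normed_vector \<Rightarrow> real) \<Rightarrow> 'a set \<Rightarrow> 'a \<Rightarrow> (nat \<Rightarrow> real) \<Rightarrow> (nat \<Rightarrow> real) \<Rightarrow> nat \<Rightarrow> 'a \<times> ('a \<Rightarrow> real)" where
  "vpseq f D y0 mu ep 0 = (y0, \<lambda>z. 0)"
| "vpseq f D y0 mu ep (Suc n) =
    (let y = fst (vpseq f D y0 mu ep n);
         P = (\<lambda>z. snd (vpseq f D y0 mu ep n) z + mu n * (norm (z - y))^2)
     in (SOME z. z \<in> D \<and> f z + P z \<le> f y + P y \<and> (\<forall>w\<in>D. f z + P z \<le> f w + P w + ep (Suc n)), P))"

lemma sq_diff_expand: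
  fixes z ys y :: "'a::real_inner"
  shows "(norm (z - y))^2 - (norm (ys - y))^2 = (norm (z - ys))^2 + 2 * inner (z - ys) (ys - y)"
proof -
  have "z - y = (z - ys) + (ys - y)" by simp
  then have "(norm (z - y))^2 = (norm (z - ys))^2 + 2 * inner (z - ys) (ys - y) + (norm (ys - y))^2"
    by (metis power2_norm_eq_inner inner_add_left inner_add_right inner_commute mult_2 add.assoc)
  then show ?thesis by simp
qed

lemma VP:
  fixes f :: "'a::{real_inner,complete_space} \<Rightarrow> real"
  assumes D: "closed D" and fc: "continuous_on UNIV f" and lb: "\<And>y. y \<in> D \<Longrightarrow> m \<le> f y"
    and y0: "y0 \<in> D" and eps: "\<epsilon> > 0" and ymin: "\<And>w. w \<in> D \<Longrightarrow> f y0 \<le> f w + \<epsilon>" and del: "\<delta> > 0"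
  shows "\<exists>ys G M. ys \<in> D \<and> norm (ys - y0) \<le> \<delta> \<and> f ys \<le> f y0 \<and> norm G \<le> 3 * \<epsilon> / \<delta> \<and> M \<ge> 0 \<and>
           (\<forall>z\<in>D. f ys \<le> f z + inner G (z - ys) + M * (norm (z - ys))^2)"
proof -
  define \<mu> where "\<mu> = \<epsilon> / \<delta>^2"
  have mupos: "\<mu> > 0" using eps del by (simp add: \<mu>_def)
  define mu where "mu = (\<lambda>k::nat. \<mu> * (1/2)^k)"
  define ep where "ep = (\<lambda>k::nat. \<epsilon> * (1/8)^k)"
  define rad where "rad = (\<lambda>k::nat. \<delta> * (1/2)^k)"
  have mu_pos: "\<And>k. mu k > 0" using mupos by (simp add: mu_def)
  have ep_pos: "\<And>k. ep k > 0" using eps by (simp add: ep_def)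
  have ep_eq: "\<And>k. ep k = mu k * (rad k)^2"
  proof -
    fix k :: nat
    have e8: "(1/8::real) = (1/2)*(1/2)*(1/2)" by simp
    have "(1/8::real)^k = (1/2)^k * ((1/2)^k)^2"
      unfolding e8 power_mult_distrib by (simp add: power2_eq_square)
    then show "ep k = mu k * (rad k)^2" using del
      by (simp add: ep_def mu_def rad_def \<mu>_def power_mult_distrib field_simps)
  qed
  define Y where "Y = (\<lambda>n. fst (vpseq f D y0 mu ep n))"
  define P where "P = (\<lambda>n. snd (vpseq f D y0 mu ep n))"
  have P0: "P 0 = (\<lambda>z. 0)" by (simp add: P_def)
  have PS: "\<And>n z. P (Suc n) z = P n z + mu n * (norm (z - Y n))^2"
    by (simp add: P_def Y_def Let_def)
  have YS: "\<And>n. Y (Suc n) = (SOME z. z \<in> D \<and> f z + P (Suc n) z \<le> f (Y n) + P (Suc n) (Y n) \<and>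
                 (\<forall>w\<in>D. f z + P (Suc n) z \<le> f w + P (Suc n) w + ep (Suc n)))"
    by (simp add: P_def Y_def Let_def)
  have Psum: "\<And>n z. P n z = (\<Sum>k<n. mu k * (norm (z - Y k))^2)"
  proof -
    fix n z show "P n z = (\<Sum>k<n. mu k * (norm (z - Y k))^2)"
      by (induction n) (simp_all add: P0 PS)
  qed
  have Pnn: "\<And>n z. P n z \<ge> 0" unfolding Psum using mu_pos by (intro sum_nonneg) (simp add: less_imp_le)
  define F where "F = (\<lambda>n z. f z + P n z)"
  have FS: "\<And>n z. F (Suc n) z = F n z + mu n * (norm (z - Y n))^2" by (simp add: F_def PS)
  have inv: "\<And>n. Y n \<in> D \<and> (\<forall>w\<in>D. F n (Y n) \<le> F n w + ep n) \<and> (n > 0 \<longrightarrow> F n (Y n) \<le> F n (Y (n - 1)))"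
  proof -
    fix n show "Y n \<in> D \<and> (\<forall>w\<in>D. F n (Y n) \<le> F n w + ep n) \<and> (n > 0 \<longrightarrow> F n (Y n) \<le> F n (Y (n - 1)))"
    proof (induction n)
      case 0
      have "Y 0 = y0" by (simp add: Y_def)
      then show ?case using y0 ymin by (simp add: F_def P0 ep_def)
    next
      case (Suc n)
      have "\<exists>z\<in>D. F (Suc n) z \<le> F (Suc n) (Y n) \<and> (\<forall>w\<in>D. F (Suc n) z \<le> F (Suc n) w + ep (Suc n))"
        by (rule near_min_exists[where m = m]) (use Suc.IH lb Pnn ep_pos in \<open>auto simp: F_def intro: add_increasing2\<close>)
      then have "\<exists>z. z \<in> D \<and> f z + P (Suc n) z \<le> f (Y n) + P (Suc n) (Y n) \<and>
                 (\<forall>w\<in>D. f z + P (Suc n) z \<le> f w + P (Suc n) w + ep (Suc n))"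
        by (auto simp: F_def)
      from someI_ex[OF this] show ?case unfolding YS[symmetric] by (simp add: F_def)
    qed
  qed
  define S where "S = (\<lambda>n. {z\<in>D. F n z \<le> F n (Y n)})"
  have YinS: "\<And>n. Y n \<in> S n" using inv by (simp add: S_def)
  have step: "\<And>n z. z \<in> S (Suc n) \<Longrightarrow> z \<in> S n \<and> mu n * (norm (z - Y n))^2 \<le> ep n"
  proof -
    fix n z assume z: "z \<in> S (Suc n)"
    then have zD: "z \<in> D" by (auto simp: S_def)
    from z have "F (Suc n) z \<le> F (Suc n) (Y (Suc n))" by (auto simp: S_def)
    also have "\<dots> \<le> F (Suc n) (Y n)" using inv[of "Suc n"] by simp
    also have "\<dots> = F n (Y n)" by (simp add: FS)
    finally have a: "F n z + mu n * (norm (z - Y n))^2 \<le> F n (Y n)" by (simp add: FS)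
    have b: "F n (Y n) \<le> F n z + ep n" using inv[of n] zD by auto
    have "0 \<le> mu n * (norm (z - Y n))^2" using mu_pos[of n] by simp
    then show "z \<in> S n \<and> mu n * (norm (z - Y n))^2 \<le> ep n" using a b zD by (auto simp: S_def)
  qed
  have stepr: "\<And>n z. z \<in> S (Suc n) \<Longrightarrow> norm (z - Y n) \<le> rad n"
  proof -
    fix n z assume "z \<in> S (Suc n)"
    then have "mu n * (norm (z - Y n))^2 \<le> mu n * (rad n)^2" using step ep_eq by simp
    then have "(norm (z - Y n))^2 \<le> (rad n)^2" using mu_pos[of n] by simp
    moreover have "rad n \<ge> 0" using del by (simp add: rad_def)
    ultimately show "norm (z - Y n) \<le> rad n" by (rule power2_le_imp_le)
  qed
  have dec: "decseq S" using step by (intro decseq_SucI) blast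
  have mono_S: "\<And>m n. n \<le> m \<Longrightarrow> S m \<subseteq> S n" using dec by (simp add: decseq_def)
  have Ybound: "\<And>m n. n \<le> m \<Longrightarrow> norm (Y m - Y n) \<le> rad n"
  proof -
    fix m n :: nat assume "n \<le> m"
    show "norm (Y m - Y n) \<le> rad n"
    proof (cases "m = n")
      case True thus ?thesis using del by (simp add: rad_def)
    next
      case False
      then have "Suc n \<le> m" using \<open>n \<le> m\<close> by simp
      then have "Y m \<in> S (Suc n)" using mono_S YinS by blast
      then show ?thesis by (rule stepr)
    qed
  qed
  have rad_lim: "rad \<longlonglongrightarrow> 0"
    unfolding rad_def by (intro tendsto_mult_right_zero LIMSEQ_realpow_zero) auto
  have "Cauchy Y"
  proof (rule CauchyI)
    fix e :: real assume "e > 0"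
    then have "e / 2 > 0" by simp
    from rad_lim[unfolded LIMSEQ_def, rule_format, OF this] obtain N where N: "\<And>n. n \<ge> N \<Longrightarrow> dist (rad n) 0 < e / 2" by blast
    have rN: "rad N < e / 2" using N[of N] del by (simp add: rad_def)
    show "\<exists>M. \<forall>m\<ge>M. \<forall>n\<ge>M. norm (Y m - Y n) < e"
    proof (intro exI allI impI)
      fix m n assume "m \<ge> N" "n \<ge> N"
      then have "norm (Y m - Y N) \<le> rad N" "norm (Y n - Y N) \<le> rad N" using Ybound by auto
      then have "norm (Y m - Y n) \<le> rad N + rad N"
        using norm_triangle_ineq4[of "Y m - Y N" "Y n - Y N"] by simp
      then show "norm (Y m - Y n) < e" using rN by simp
    qed
  qed
  then obtain ys where Ylim: "Y \<longlonglongrightarrow> ys" using Cauchy_convergent_iff convergent_def by blast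
  have contF: "\<And>n. continuous_on UNIV (F n)"
    unfolding F_def Psum by (intro continuous_intros fc)
  have Sclosed: "\<And>n. closed (S n)"
  proof -
    fix n
    have "S n = D \<inter> {z. F n z \<le> F n (Y n)}" by (auto simp: S_def)
    moreover have "closed {z. F n z \<le> F n (Y n)}"
      using contF[of n] by (intro closed_Collect_le continuous_intros) (auto simp: continuous_on_eq_continuous_within)
    ultimately show "closed (S n)" using D by auto
  qed
  have ysS: "\<And>n. ys \<in> S n"
  proof -
    fix n
    have l: "(\<lambda>m. Y (m + n)) \<longlonglongrightarrow> ys" using Ylim by (rule LIMSEQ_ignore_initial_segment)
    have i: "\<And>m. Y (m + n) \<in> S n" using mono_S YinS by (meson le_add2 subsetD)
    show "ys \<in> S n" by (rule closed_sequentially[OF Sclosed[of n], of "\<lambda>m. Y (m + n)"]) (use l i in auto)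
  qed
  have ysY: "\<And>n. norm (ys - Y n) \<le> rad n" using ysS stepr by blast
  define Mn where "Mn = (\<lambda>n. \<Sum>k<n. mu k)"
  define V where "V = (\<lambda>n. \<Sum>k<n. mu k *\<^sub>R (ys - Y k))"
  have expand: "\<And>n z. F n z - F n ys = f z - f ys + Mn n * (norm (z - ys))^2 + 2 * inner (z - ys) (V n)"
  proof -
    fix n z
    have "P n z - P n ys = (\<Sum>k<n. mu k * ((norm (z - Y k))^2 - (norm (ys - Y k))^2))"
      unfolding Psum by (simp add: sum_subtractf[symmetric] right_diff_distrib)
    also have "\<dots> = (\<Sum>k<n. mu k * (norm (z - ys))^2 + 2 * inner (z - ys) (mu k *\<^sub>R (ys - Y k)))"
      unfolding sq_diff_expand by (intro sum.cong) (auto simp: algebra_simps)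
    also have "\<dots> = Mn n * (norm (z - ys))^2 + 2 * inner (z - ys) (V n)"
      by (simp add: Mn_def V_def sum.distrib sum_distrib_left sum_distrib_right inner_sum_right)
    finally show "F n z - F n ys = f z - f ys + Mn n * (norm (z - ys))^2 + 2 * inner (z - ys) (V n)"
      by (simp add: F_def)
  qed
  have geo2: "(\<Sum>k. (1/2::real)^k) = 2" by (simp add: suminf_geometric)
  have geo4: "(\<Sum>k. (1/4::real)^k) = 4/3" by (simp add: suminf_geometric)
  have Mn_le: "\<And>n. Mn n \<le> 2 * \<mu>"
  proof -
    fix n
    have "(\<Sum>k<n. (1/2::real)^k) \<le> (\<Sum>k. (1/2)^k)"
      by (intro sum_le_suminf) (auto intro: summable_geometric)
    then show "Mn n \<le> 2 * \<mu>" using mupos unfolding Mn_def mu_def geo2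
      by (simp add: sum_distrib_left[symmetric])
  qed
  define a where "a = (\<lambda>k. mu k *\<^sub>R (ys - Y k))"
  have anorm: "\<And>k. norm (a k) \<le> \<mu> * \<delta> * (1/4)^k"
  proof -
    fix k
    have "norm (a k) = mu k * norm (ys - Y k)" using mu_pos[of k] by (simp add: a_def)
    also have "\<dots> \<le> mu k * rad k" using ysY mu_pos[of k] by (intro mult_left_mono) (auto simp: less_imp_le)
    also have "\<dots> = \<mu> * \<delta> * (1/4)^k"
      by (simp add: mu_def rad_def power_mult_distrib[symmetric])
    finally show "norm (a k) \<le> \<mu> * \<delta> * (1/4)^k" .
  qed
  have sg: "summable (\<lambda>k. \<mu> * \<delta> * (1/4::real)^k)" by (intro summable_mult summable_geometric) simp
  have san: "summable (\<lambda>k. norm (a k))" by (rule summable_comparison_test'[OF sg]) (use anorm in auto)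
  have sC: "Cauchy (\<lambda>n. \<Sum>k<n. norm (a k))"
    using summable_LIMSEQ[OF san] convergent_Cauchy convergent_def by blast
  have Vdiff: "\<And>m n. n \<le> m \<Longrightarrow> norm (V m - V n) \<le> (\<Sum>k<m. norm (a k)) - (\<Sum>k<n. norm (a k))"
  proof -
    fix m n :: nat assume nm: "n \<le> m"
    have U: "{..<m} = {..<n} \<union> {n..<m}" "{..<n} \<inter> {n..<m} = {}" using nm by auto
    have "V m - V n = (\<Sum>k\<in>{n..<m}. a k)" unfolding V_def a_def U(1)
      by (subst sum.union_disjoint) (use U(2) in auto)
    moreover have "(\<Sum>k<m. norm (a k)) - (\<Sum>k<n. norm (a k)) = (\<Sum>k\<in>{n..<m}. norm (a k))" unfolding U(1)
      by (subst sum.union_disjoint) (use U(2) in auto)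
    ultimately show "norm (V m - V n) \<le> (\<Sum>k<m. norm (a k)) - (\<Sum>k<n. norm (a k))"
      by (simp add: norm_sum)
  qed
  have "Cauchy V"
  proof (rule CauchyI)
    fix e :: real assume "e > 0"
    from CauchyD[OF sC this] obtain M where M: "\<And>m n. m \<ge> M \<Longrightarrow> n \<ge> M \<Longrightarrow> norm ((\<Sum>k<m. norm (a k)) - (\<Sum>k<n. norm (a k))) < e" by blast
    show "\<exists>M. \<forall>m\<ge>M. \<forall>n\<ge>M. norm (V m - V n) < e"
    proof (intro exI allI impI)
      fix m n assume mn: "m \<ge> M" "n \<ge> M"
      show "norm (V m - V n) < e"
      proof (cases "n \<le> m")
        case True thus ?thesis using Vdiff[OF True] M[OF mn] by simp
      next
        case False
        then have mn': "m \<le> n" by simp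
        show ?thesis using Vdiff[OF mn'] M[OF mn(2,1)] by (simp add: norm_minus_commute)
      qed
    qed
  qed
  then obtain Vl where Vlim: "V \<longlonglongrightarrow> Vl" using Cauchy_convergent_iff convergent_def by blast
  have Vnorm: "norm Vl \<le> \<mu> * \<delta> * (4/3)"
  proof -
    have s43: "(\<Sum>k. \<mu> * \<delta> * (1/4)^k) = \<mu> * \<delta> * (4/3)" using suminf_mult[of "\<lambda>k. (1/4::real)^k" "\<mu> * \<delta>"] geo4
      by (simp add: summable_geometric)
    have "\<And>n. norm (V n) \<le> \<mu> * \<delta> * (4/3)"
    proof -
      fix n
      have "norm (V n) \<le> (\<Sum>k<n. norm (a k))" unfolding V_def a_def by (rule norm_sum)
      also have "\<dots> \<le> (\<Sum>k<n. \<mu> * \<delta> * (1/4)^k)" by (intro sum_mono anorm)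
      also have "\<dots> \<le> (\<Sum>k. \<mu> * \<delta> * (1/4)^k)"
        by (intro sum_le_suminf sg) (use mupos del in auto)
      finally show "norm (V n) \<le> \<mu> * \<delta> * (4/3)" using s43 by simp
    qed
    then show ?thesis by (intro LIMSEQ_le_const2[OF tendsto_norm[OF Vlim]]) auto
  qed
  define G where "G = 2 *\<^sub>R Vl"
  have Gnorm: "norm G \<le> 3 * \<epsilon> / \<delta>"
  proof -
    have "norm G \<le> 2 * (\<mu> * \<delta> * (4/3))" using Vnorm by (simp add: G_def mult.commute)
    also have "\<dots> = (8/3) * \<epsilon> / \<delta>" using del by (simp add: \<mu>_def power2_eq_square field_simps)
    also have "\<dots> \<le> 3 * \<epsilon> / \<delta>" using eps del by (simp add: field_simps)
    finally show ?thesis .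
  qed
  have main: "\<And>z. z \<in> D \<Longrightarrow> f ys \<le> f z + inner G (z - ys) + (2 * \<mu>) * (norm (z - ys))^2"
  proof -
    fix z assume zD: "z \<in> D"
    show "f ys \<le> f z + inner G (z - ys) + (2 * \<mu>) * (norm (z - ys))^2"
    proof (cases "\<forall>n. z \<in> S n")
      case True
      then have "\<And>n. norm (z - Y n) \<le> rad n" using stepr by blast
      then have "(\<lambda>n. Y n - z) \<longlonglongrightarrow> 0"
        by (intro Lim_null_comparison[OF _ rad_lim] always_eventually) (simp add: norm_minus_commute)
      then have "Y \<longlonglongrightarrow> z" by (rule LIM_zero_cancel)
      then have "z = ys" using Ylim LIMSEQ_unique by blast
      then show ?thesis by simp
    next
      case False
      then obtain N where N: "z \<notin> S N" by blast
      have ev: "\<forall>n\<ge>N. f ys - f z \<le> 2 * \<mu> * (norm (z - ys))^2 + 2 * inner (z - ys) (V n)"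
      proof (intro allI impI)
        fix n assume "n \<ge> N"
        then have "z \<notin> S n" using N mono_S by blast
        then have "F n z > F n (Y n)" using zD by (auto simp: S_def)
        moreover have "F n ys \<le> F n (Y n)" using ysS[of n] by (simp add: S_def)
        ultimately have "F n z - F n ys \<ge> 0" by simp
        then have "f ys - f z \<le> Mn n * (norm (z - ys))^2 + 2 * inner (z - ys) (V n)"
          using expand[of n z] by simp
        also have "\<dots> \<le> 2 * \<mu> * (norm (z - ys))^2 + 2 * inner (z - ys) (V n)"
          using Mn_le[of n] by (simp add: mult_right_mono)
        finally show "f ys - f z \<le> 2 * \<mu> * (norm (z - ys))^2 + 2 * inner (z - ys) (V n)" .
      qed
      have lim: "(\<lambda>n. 2 * \<mu> * (norm (z - ys))^2 + 2 * inner (z - ys) (V n)) \<longlonglongrightarrow>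
                  2 * \<mu> * (norm (z - ys))^2 + 2 * inner (z - ys) (Vl)"
        by (intro tendsto_intros Vlim)
      have "f ys - f z \<le> 2 * \<mu> * (norm (z - ys))^2 + 2 * inner (z - ys) (Vl)"
        by (rule LIMSEQ_le_const[OF lim]) (use ev in blast)
      then show ?thesis by (simp add: G_def inner_commute algebra_simps)
    qed
  qed
  have "ys \<in> D" using ysS[of 0] by (simp add: S_def)
  moreover have "norm (ys - y0) \<le> \<delta>" using ysY[of 0] by (simp add: Y_def rad_def)
  moreover have "f ys \<le> f y0" using ysS[of 0] by (simp add: S_def F_def P0 Y_def)
  ultimately show ?thesis using Gnorm main mupos
    by (intro exI[of _ ys] exI[of _ G] exI[of _ "2 * \<mu>"]) auto
qed



lemma cont_Max_fin:
  fixes f :: "'i \<Rightarrow> 'a::topological_space \<Rightarrow> real"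
  assumes "finite I" "I \<noteq> {}" "\<And>i. i \<in> I \<Longrightarrow> continuous_on S (f i)"
  shows "continuous_on S (\<lambda>y. Max ((\<lambda>i. f i y) ` I))"
  using assms
proof (induction I rule: finite_ne_induct)
  case (singleton i) thus ?case by simp
next
  case (insert i I)
  have eq: "(\<lambda>y. Max ((\<lambda>j. f j y) ` insert i I)) = (\<lambda>y. max (f i y) (Max ((\<lambda>j. f j y) ` I)))"
    using insert by (auto simp: Max_insert)
  show ?case unfolding eq by (rule continuous_on_max) (use insert in auto)
qed

lemma norm_diff_sq:
  fixes a b :: "'a::real_inner"
  shows "(norm (a - b))^2 = (norm a)^2 - 2 * inner a b + (norm b)^2"
  by (simp add: power2_norm_eq_inner inner_diff_left inner_diff_right inner_commute)

lemma proj_ineq: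
  fixes y p q :: "'a::real_inner"
  assumes "convex C" "p \<in> C" "q \<in> C" "\<And>z. z \<in> C \<Longrightarrow> norm (y - p) \<le> norm (y - z)"
  shows "inner (y - p) (q - p) \<le> 0"
proof (rule ccontr)
  assume "\<not> ?thesis"
  then have al: "inner (y - p) (q - p) > 0" by simp
  define e where "e = q - p"
  define \<alpha> where "\<alpha> = inner (y - p) e"
  have apos: "\<alpha> > 0" using al by (simp add: \<alpha>_def e_def)
  have "e \<noteq> 0" using apos by (auto simp: \<alpha>_def)
  then have en: "(norm e)^2 > 0" by simp
  define t where "t = min 1 (\<alpha> / (norm e)^2)"
  have t0: "t > 0" using apos en by (simp add: t_def)
  have t1: "t \<le> 1" by (simp add: t_def)
  have te: "t * (norm e)^2 \<le> \<alpha>" using en by (simp add: t_def min_def field_simps)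
  have zC: "p + t *\<^sub>R e \<in> C"
  proof -
    have "p + t *\<^sub>R e = (1 - t) *\<^sub>R p + t *\<^sub>R q" by (simp add: e_def algebra_simps)
    thus ?thesis using assms(1-3) t0 t1 by (simp add: convex_def)
  qed
  have "(norm (y - (p + t *\<^sub>R e)))^2 = (norm (y - p))^2 - 2 * t * \<alpha> + t * (t * (norm e)^2)"
  proof -
    have eq: "y - (p + t *\<^sub>R e) = (y - p) - t *\<^sub>R e" by simp
    show ?thesis unfolding eq norm_diff_sq[of "y - p" "t *\<^sub>R e"]
      by (simp add: \<alpha>_def power_mult_distrib power2_eq_square)
  qed
  also have "\<dots> \<le> (norm (y - p))^2 - 2 * t * \<alpha> + t * \<alpha>" using te t0 by (intro add_left_mono mult_left_mono) auto
  also have "\<dots> < (norm (y - p))^2" using t0 apos by simp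
  finally have "norm (y - (p + t *\<^sub>R e)) < norm (y - p)" by (rule power2_less_imp_less) simp
  with assms(4)[OF zC] show False by simp
qed

lemma kirsz_finite:
  fixes c x :: "'i \<Rightarrow> 'a::real_inner" and x0 :: 'a
  assumes fin: "finite I" and lip: "\<And>i j. i \<in> I \<Longrightarrow> j \<in> I \<Longrightarrow> norm (c i - c j) \<le> norm (x i - x j)"
  shows "\<exists>y. \<forall>i\<in>I. norm (y - c i) \<le> norm (x i - x0)"
proof (cases "I = {}")
  case True thus ?thesis by simp
next
  case ne: False
  define \<phi> where "\<phi> = (\<lambda>i y. (norm (y - c i))^2 - (norm (x i - x0))^2)"
  define \<Phi> where "\<Phi> = (\<lambda>y. Max ((\<lambda>i. \<phi> i y) ` I))"
  define K where "K = convex hull (c ` I)"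
  have Kc: "compact K" unfolding K_def using fin by (intro finite_imp_compact_convex_hull) simp
  have Kne: "K \<noteq> {}" unfolding K_def using ne by simp
  have contPhi: "continuous_on K \<Phi>" unfolding \<Phi>_def \<phi>_def
    by (intro cont_Max_fin fin ne continuous_intros)
  obtain ys where ysK: "ys \<in> K" and ysmin: "\<And>z. z \<in> K \<Longrightarrow> \<Phi> ys \<le> \<Phi> z"
    using continuous_attains_inf[OF Kc Kne contPhi] by blast
  define \<mu> where "\<mu> = \<Phi> ys"
  have phi_le: "\<And>i. i \<in> I \<Longrightarrow> \<phi> i ys \<le> \<mu>" unfolding \<mu>_def \<Phi>_def using fin by auto
  have "\<mu> \<le> 0"
  proof (rule ccontr)
    assume "\<not> \<mu> \<le> 0"
    then have mupos: "\<mu> > 0" by simp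
    define A where "A = {i\<in>I. \<phi> i ys = \<mu>}"
    have finA: "finite A" using fin by (simp add: A_def)
    have Ane: "A \<noteq> {}"
    proof -
      have "\<mu> \<in> (\<lambda>i. \<phi> i ys) ` I" unfolding \<mu>_def \<Phi>_def using fin ne by (intro Max_in) auto
      thus ?thesis by (auto simp: A_def)
    qed
    have AI: "A \<subseteq> I" by (auto simp: A_def)
    have inhull: "ys \<in> convex hull (c ` A)"
    proof (rule ccontr)
      assume nin: "ys \<notin> convex hull (c ` A)"
      define CA where "CA = convex hull (c ` A)"
      have CAc: "compact CA" unfolding CA_def using finA by (intro finite_imp_compact_convex_hull) simp
      have CAne: "CA \<noteq> {}" unfolding CA_def using Ane by simp
      have "continuous_on CA (\<lambda>z. norm (ys - z))" by (intro continuous_intros)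
      then obtain p where pC: "p \<in> CA" and pmin: "\<And>z. z \<in> CA \<Longrightarrow> norm (ys - p) \<le> norm (ys - z)"
        using continuous_attains_inf[OF CAc CAne, of "\<lambda>z. norm (ys - z)"] by blast
      define d where "d = ys - p"
      have dne: "d \<noteq> 0" using nin pC by (auto simp: d_def CA_def)
      have pr: "\<And>q. q \<in> CA \<Longrightarrow> inner d (q - p) \<le> 0"
        unfolding d_def by (rule proj_ineq[OF _ pC _ pmin]) (auto simp: CA_def)
      have CAK: "CA \<subseteq> K" unfolding CA_def K_def using AI by (intro hull_mono) auto
      have act: "\<And>i. i \<in> A \<Longrightarrow> inner d (c i - ys) \<le> - ((norm d)^2)"
      proof -
        fix i assume "i \<in> A"
        then have "c i \<in> CA" unfolding CA_def by (simp add: hull_inc)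
        then have "inner d (c i - p) \<le> 0" by (rule pr)
        moreover have eq: "c i - ys = (c i - p) - d" by (simp add: d_def)
        moreover have "inner d (c i - ys) = inner d (c i - p) - (norm d)^2"
          by (simp only: eq inner_diff_right power2_norm_eq_inner)
        ultimately show "inner d (c i - ys) \<le> - ((norm d)^2)" by simp
      qed
      have phit: "\<And>i t. \<phi> i (ys - t *\<^sub>R d) = \<phi> i ys + 2 * t * inner d (c i - ys) + t^2 * (norm d)^2"
      proof -
        fix i t
        have eq: "ys - t *\<^sub>R d - c i = (ys - c i) - t *\<^sub>R d" by simp
        have "(norm (ys - t *\<^sub>R d - c i))^2 = (norm (ys - c i))^2 - 2 * t * inner (ys - c i) d + t^2 * (norm d)^2"
          unfolding eq norm_diff_sq[of "ys - c i"] by (simp add: power_mult_distrib)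
        then show "\<phi> i (ys - t *\<^sub>R d) = \<phi> i ys + 2 * t * inner d (c i - ys) + t^2 * (norm d)^2"
          unfolding \<phi>_def by (simp add: inner_commute inner_diff_left inner_diff_right algebra_simps)
      qed
      have ev1: "\<forall>i\<in>I. eventually (\<lambda>t. \<phi> i (ys - t *\<^sub>R d) < \<mu>) (at_right (0::real))"
      proof
        fix i assume iI: "i \<in> I"
        show "eventually (\<lambda>t. \<phi> i (ys - t *\<^sub>R d) < \<mu>) (at_right (0::real))"
        proof (cases "i \<in> A")
          case True
          have dpos: "(norm d)^2 > 0" using dne by simp
          have "eventually (\<lambda>t. t \<in> {0<..<1}) (at_right (0::real))" by (rule eventually_at_right_real) simp
          then show ?thesis
          proof (rule eventually_mono)
            fix t :: real assume t: "t \<in> {0<..<1}"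
            have "\<phi> i (ys - t *\<^sub>R d) \<le> \<mu> + 2 * t * (- ((norm d)^2)) + t^2 * (norm d)^2"
            proof -
              have m: "t * inner d (c i - ys) \<le> t * (- ((norm d)^2))" using act[OF True] t by (intro mult_left_mono) auto
              show ?thesis unfolding phit using m True by (simp add: A_def)
            qed
            also have "\<dots> < \<mu>"
            proof -
              have "t^2 * (norm d)^2 = t * (t * (norm d)^2)" by (simp add: power2_eq_square)
              also have "\<dots> < t * (2 * (norm d)^2)" using t dpos by (intro mult_strict_left_mono) auto
              finally show ?thesis by simp
            qed
            finally show "\<phi> i (ys - t *\<^sub>R d) < \<mu>" .
          qed
        next
          case False
          then have lt: "\<phi> i ys < \<mu>" using phi_le[OF iI] iI by (auto simp: A_def)
          have "((\<lambda>t. \<phi> i (ys - t *\<^sub>R d)) \<longlongrightarrow> \<phi> i (ys - 0 *\<^sub>R d)) (at_right (0::real))"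
            unfolding \<phi>_def by (intro tendsto_intros)
          then have "((\<lambda>t. \<phi> i (ys - t *\<^sub>R d)) \<longlongrightarrow> \<phi> i ys) (at_right (0::real))" by simp
          from order_tendstoD(2)[OF this lt] show ?thesis .
        qed
      qed
      have "eventually (\<lambda>t. (\<forall>i\<in>I. \<phi> i (ys - t *\<^sub>R d) < \<mu>) \<and> t \<in> {0<..<1}) (at_right (0::real))"
        using eventually_ball_finite[OF fin ev1] eventually_at_right_real[of 0 1] by (auto intro: eventually_conj)
      then obtain t :: real where t: "\<forall>i\<in>I. \<phi> i (ys - t *\<^sub>R d) < \<mu>" "t \<in> {0<..<1}"
        using eventually_happens[of _ "at_right (0::real)"] by (auto simp: trivial_limit_at_right_real)
      have "ys - t *\<^sub>R d \<in> K"
      proof -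
        have "ys - t *\<^sub>R d = (1 - t) *\<^sub>R ys + t *\<^sub>R p" by (simp add: d_def algebra_simps)
        moreover have "convex K" unfolding K_def by simp
        ultimately show ?thesis using ysK CAK pC t(2) by (auto simp: convex_def)
      qed
      then have "\<Phi> ys \<le> \<Phi> (ys - t *\<^sub>R d)" by (rule ysmin)
      moreover have "\<Phi> (ys - t *\<^sub>R d) < \<mu>" unfolding \<Phi>_def using fin ne t(1) by simp
      ultimately show False by (simp add: \<mu>_def)
    qed
    define Q where "Q = c ` A"
    have finQ: "finite Q" using finA by (simp add: Q_def)
    obtain w where w0: "\<And>q. q \<in> Q \<Longrightarrow> 0 \<le> w q" and w1: "sum w Q = 1" and wy: "(\<Sum>q\<in>Q. w q *\<^sub>R q) = ys"
      using inhull unfolding convex_hull_finite[OF finQ] Q_def[symmetric] by blast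
    define pre where "pre = (\<lambda>q. SOME i. i \<in> A \<and> c i = q)"
    have pre: "\<And>q. q \<in> Q \<Longrightarrow> pre q \<in> A \<and> c (pre q) = q"
      unfolding pre_def Q_def by (rule someI_ex) auto
    define u where "u = (\<lambda>q. x (pre q) - x0)"
    have pair: "\<And>q q'. q \<in> Q \<Longrightarrow> q' \<in> Q \<Longrightarrow> inner (q - ys) (q' - ys) \<ge> \<mu> + inner (u q) (u q')"
    proof -
      fix q q' assume q: "q \<in> Q" and q': "q' \<in> Q"
      let ?i = "pre q" and ?j = "pre q'"
      have iA: "?i \<in> A" "c ?i = q" using pre[OF q] by auto
      have jA: "?j \<in> A" "c ?j = q'" using pre[OF q'] by auto
      have phi_i: "(norm (ys - q))^2 = \<mu> + (norm (u q))^2" using iA by (simp add: A_def \<phi>_def u_def)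
      have phi_j: "(norm (ys - q'))^2 = \<mu> + (norm (u q'))^2" using jA by (simp add: A_def \<phi>_def u_def)
      have l: "norm (q - q') \<le> norm (u q - u q')"
        using lip[of ?i ?j] iA jA AI by (auto simp: u_def)
      then have l2: "(norm (q - q'))^2 \<le> (norm (u q - u q'))^2" by (simp add: power_mono)
      have e1: "2 * inner (q - ys) (q' - ys) = (norm (ys - q))^2 + (norm (ys - q'))^2 - (norm (q - q'))^2"
      proof -
        have "q - q' = (q - ys) - (q' - ys)" by simp
        then have "(norm (q - q'))^2 = (norm (q - ys))^2 - 2 * inner (q - ys) (q' - ys) + (norm (q' - ys))^2"
          by (metis norm_diff_sq)
        then show ?thesis by (simp add: norm_minus_commute)
      qed
      have e2: "(norm (u q - u q'))^2 = (norm (u q))^2 - 2 * inner (u q) (u q') + (norm (u q'))^2"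
        by (rule norm_diff_sq)
      show "inner (q - ys) (q' - ys) \<ge> \<mu> + inner (u q) (u q')"
        using e1 e2 l2 phi_i phi_j by linarith
    qed
    have zero: "(\<Sum>q\<in>Q. w q *\<^sub>R (q - ys)) = 0"
      by (simp add: scaleR_diff_right sum_subtractf wy scaleR_sum_left[symmetric] w1)
    have "0 = inner (\<Sum>q\<in>Q. w q *\<^sub>R (q - ys)) (\<Sum>q'\<in>Q. w q' *\<^sub>R (q' - ys))" by (simp add: zero)
    also have "\<dots> = (\<Sum>q\<in>Q. \<Sum>q'\<in>Q. w q * w q' * inner (q - ys) (q' - ys))"
      by (simp add: inner_sum_left inner_sum_right sum_distrib_left mult.assoc, subst sum.swap,
          simp add: inner_commute mult.left_commute)
    also have "\<dots> \<ge> (\<Sum>q\<in>Q. \<Sum>q'\<in>Q. w q * w q' * (\<mu> + inner (u q) (u q')))"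
      by (intro sum_mono mult_left_mono pair) (auto intro: w0 mult_nonneg_nonneg)
    finally have "(\<Sum>q\<in>Q. \<Sum>q'\<in>Q. w q * w q' * (\<mu> + inner (u q) (u q'))) \<le> 0" by simp
    moreover have "(\<Sum>q\<in>Q. \<Sum>q'\<in>Q. w q * w q' * (\<mu> + inner (u q) (u q'))) =
                   (\<Sum>q\<in>Q. \<Sum>q'\<in>Q. w q * w q' * \<mu>) + (\<Sum>q\<in>Q. \<Sum>q'\<in>Q. w q * w q' * inner (u q) (u q'))"
      by (simp add: distrib_left sum.distrib)
    moreover have "(\<Sum>q\<in>Q. \<Sum>q'\<in>Q. w q * w q' * \<mu>) = \<mu>"
    proof -
      have "\<And>q. (\<Sum>q'\<in>Q. w q * w q' * \<mu>) = w q * \<mu> * (\<Sum>q'\<in>Q. w q')"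
        by (simp add: sum_distrib_left mult_ac)
      then have "(\<Sum>q\<in>Q. \<Sum>q'\<in>Q. w q * w q' * \<mu>) = (\<Sum>q\<in>Q. w q * \<mu>)"
        by (simp add: w1)
      also have "\<dots> = (\<Sum>q\<in>Q. w q) * \<mu>" by (simp add: sum_distrib_right)
      finally show ?thesis using w1 by simp
    qed
    moreover have "(\<Sum>q\<in>Q. \<Sum>q'\<in>Q. w q * w q' * inner (u q) (u q')) =
                   inner (\<Sum>q\<in>Q. w q *\<^sub>R u q) (\<Sum>q'\<in>Q. w q' *\<^sub>R u q')"
      by (simp add: inner_sum_left inner_sum_right sum_distrib_left mult.assoc, subst sum.swap,
          simp add: inner_commute mult.left_commute)
    moreover have "inner (\<Sum>q\<in>Q. w q *\<^sub>R u q) (\<Sum>q'\<in>Q. w q' *\<^sub>R u q') \<ge> 0" by simp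
    ultimately show False using w1 mupos by simp
  qed
  show ?thesis
  proof (intro exI ballI)
    fix i assume "i \<in> I"
    then have "(norm (ys - c i))^2 \<le> (norm (x i - x0))^2" using phi_le[of i] \<open>\<mu> \<le> 0\<close> unfolding \<phi>_def by linarith
    then show "norm (ys - c i) \<le> norm (x i - x0)" by (simp add: power_mono_iff)
  qed
qed



lemma cauchy_from_bound:
  fixes y :: "nat \<Rightarrow> 'a::real_normed_vector"
  assumes bd: "\<And>m n. n \<le> m \<Longrightarrow> norm (y m - y n) \<le> b n" and b: "b \<longlonglongrightarrow> 0"
  shows "Cauchy y"
proof (rule CauchyI)
  fix e :: real assume "e > 0"
  then have "e / 2 > 0" by simp
  from b[unfolded LIMSEQ_def, rule_format, OF this] obtain N where N: "\<And>n. n \<ge> N \<Longrightarrow> dist (b n) 0 < e / 2" by blast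
  have rN: "b N < e / 2" using N[of N] by auto
  show "\<exists>M. \<forall>m\<ge>M. \<forall>n\<ge>M. norm (y m - y n) < e"
  proof (intro exI allI impI)
    fix m n assume "m \<ge> N" "n \<ge> N"
    then have "norm (y m - y N) \<le> b N" "norm (y n - y N) \<le> b N" using bd by auto
    then have "norm (y m - y n) \<le> b N + b N"
      using norm_triangle_ineq4[of "y m - y N" "y n - y N"] by simp
    then show "norm (y m - y n) < e" using rN by simp
  qed
qed

lemma sq_le_imp_le_sqrt:
  fixes v :: "'a::real_normed_vector"
  assumes "(norm v)^2 \<le> a"
  shows "norm v \<le> sqrt a"
  using assms real_le_rsqrt by blast

lemma balls_fip:
  fixes c :: "'i \<Rightarrow> 'a::{real_inner,complete_space}" and r :: "'i \<Rightarrow> real"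
  assumes fip: "\<And>F. finite F \<Longrightarrow> F \<subseteq> I \<Longrightarrow> \<exists>y. \<forall>i\<in>F. norm (y - c i) \<le> r i"
  shows "\<exists>y. \<forall>i\<in>I. norm (y - c i) \<le> r i"
proof (cases "I = {}")
  case True thus ?thesis by auto
next
  case False then obtain i0 where i0: "i0 \<in> I" by auto
  define C where "C = (\<lambda>F. {y. \<forall>i\<in>F. norm (y - c i) \<le> r i})"
  define s where "s = (\<lambda>F. Inf ((\<lambda>y. (norm y)^2) ` C F))"
  have Cne: "\<And>F. finite F \<Longrightarrow> F \<subseteq> I \<Longrightarrow> C F \<noteq> {}" using fip by (auto simp: C_def)
  have bddC: "\<And>F. bdd_below ((\<lambda>y. (norm y)^2) ` C F)" by (rule bdd_belowI2[of _ 0]) simp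
  have sle: "\<And>F y. y \<in> C F \<Longrightarrow> s F \<le> (norm y)^2" unfolding s_def using bddC by (auto intro: cInf_lower)
  have smono: "\<And>F G. finite G \<Longrightarrow> G \<subseteq> I \<Longrightarrow> F \<subseteq> G \<Longrightarrow> s F \<le> s G"
  proof -
    fix F G assume G: "finite G" "G \<subseteq> I" and FG: "F \<subseteq> G"
    have "C G \<subseteq> C F" using FG by (auto simp: C_def)
    then show "s F \<le> s G" unfolding s_def using Cne[OF G] bddC
      by (intro cInf_superset_mono) auto
  qed
  have sless: "\<And>F e. finite F \<Longrightarrow> F \<subseteq> I \<Longrightarrow> e > 0 \<Longrightarrow> \<exists>y\<in>C F. (norm y)^2 < s F + e"
  proof -
    fix F e assume F: "finite F" "F \<subseteq> I" and e: "(e::real) > 0"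
    have "s F < s F + e" using e by simp
    then show "\<exists>y\<in>C F. (norm y)^2 < s F + e" unfolding s_def
      using cInf_lessD[of "(\<lambda>y. (norm y)^2) ` C F" "s F + e"] Cne[OF F] by (auto simp: s_def)
  qed
  define B where "B = (norm (c i0) + r i0)^2"
  have sB: "\<And>F. finite F \<Longrightarrow> F \<subseteq> I \<Longrightarrow> s F \<le> B"
  proof -
    fix F assume F: "finite F" "F \<subseteq> I"
    have F': "finite (insert i0 F)" "insert i0 F \<subseteq> I" using F i0 by auto
    obtain y where y: "y \<in> C (insert i0 F)" using Cne[OF F'] by auto
    then have "norm (y - c i0) \<le> r i0" by (auto simp: C_def)
    then have "norm y \<le> norm (c i0) + r i0" using norm_triangle_ineq2[of y "c i0"] by simp
    then have "(norm y)^2 \<le> B" unfolding B_def by (intro power_mono) auto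
    moreover have "s F \<le> s (insert i0 F)" by (rule smono[OF F']) auto
    moreover have "s (insert i0 F) \<le> (norm y)^2" by (rule sle[OF y])
    ultimately show "s F \<le> B" by simp
  qed
  define SS where "SS = {s F | F. finite F \<and> F \<subseteq> I}"
  have SSne: "SS \<noteq> {}" unfolding SS_def by auto
  have SSbdd: "bdd_above SS" unfolding SS_def using sB by (auto intro!: bdd_aboveI[of _ B])
  define \<sigma> where "\<sigma> = Sup SS"
  have ssig: "\<And>F. finite F \<Longrightarrow> F \<subseteq> I \<Longrightarrow> s F \<le> \<sigma>"
    unfolding \<sigma>_def using SSbdd by (intro cSup_upper) (auto simp: SS_def)
  have approx: "\<And>e. e > 0 \<Longrightarrow> \<exists>F. finite F \<and> F \<subseteq> I \<and> s F > \<sigma> - e"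
  proof -
    fix e :: real assume "e > 0"
    then have "\<sigma> - e < Sup SS" by (simp add: \<sigma>_def)
    from less_cSupD[OF SSne this] show "\<exists>F. finite F \<and> F \<subseteq> I \<and> s F > \<sigma> - e" by (auto simp: SS_def)
  qed
  have key: "\<And>F e a b. finite F \<Longrightarrow> F \<subseteq> I \<Longrightarrow> s F \<ge> \<sigma> - e \<Longrightarrow> a \<in> C F \<Longrightarrow> b \<in> C F \<Longrightarrow>
               (norm a)^2 \<le> \<sigma> + e \<Longrightarrow> (norm b)^2 \<le> \<sigma> + e \<Longrightarrow> (norm (a - b))^2 \<le> 8 * e"
  proof -
    fix F e a b assume F: "finite F" "F \<subseteq> I" and sF: "s F \<ge> \<sigma> - e" and a: "a \<in> C F" and b: "b \<in> C F"
      and na: "(norm a)^2 \<le> \<sigma> + e" and nb: "(norm b)^2 \<le> \<sigma> + e"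
    define m where "m = (1/2) *\<^sub>R (a + b)"
    have mC: "m \<in> C F"
    proof -
      have "\<And>i. i \<in> F \<Longrightarrow> norm (m - c i) \<le> r i"
      proof -
        fix i assume "i \<in> F"
        then have "norm (a - c i) \<le> r i" "norm (b - c i) \<le> r i" using a b by (auto simp: C_def)
        moreover have "m - c i = (1/2) *\<^sub>R ((a - c i) + (b - c i))" by (simp add: m_def algebra_simps scaleR_add_left[symmetric])
        ultimately show "norm (m - c i) \<le> r i"
          using norm_triangle_ineq[of "a - c i" "b - c i"] by simp
      qed
      thus ?thesis by (simp add: C_def)
    qed
    have "(norm m)^2 \<ge> \<sigma> - e" using sle[OF mC] sF by simp
    moreover have "(norm (a - b))^2 + 4 * (norm m)^2 = 2 * (norm a)^2 + 2 * (norm b)^2"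
      by (simp add: m_def power2_norm_eq_inner inner_add_left inner_add_right inner_diff_left inner_diff_right inner_commute algebra_simps)
    ultimately show "(norm (a - b))^2 \<le> 8 * e" using na nb by linarith
  qed
  define e where "e = (\<lambda>n::nat. inverse (real (Suc n)))"
  have epos: "\<And>n. e n > 0" by (simp add: e_def)
  have emono: "\<And>m n. n \<le> m \<Longrightarrow> e m \<le> e n" by (simp add: e_def le_imp_inverse_le)
  have elim: "e \<longlonglongrightarrow> 0" unfolding e_def by (rule LIMSEQ_inverse_real_of_nat)
  have "\<forall>n. \<exists>F. finite F \<and> F \<subseteq> I \<and> s F > \<sigma> - e n" using approx epos by blast
  then obtain Fn where Fn: "\<And>n. finite (Fn n) \<and> Fn n \<subseteq> I \<and> s (Fn n) > \<sigma> - e n" by metis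
  define H where "H = (\<lambda>n. \<Union>k\<le>n. Fn k)"
  have Hfin: "\<And>n. finite (H n)" "\<And>n. H n \<subseteq> I" using Fn by (auto simp: H_def)
  have Hmono: "\<And>m n. n \<le> m \<Longrightarrow> H n \<subseteq> H m" unfolding H_def by (intro UN_mono) auto
  have Hs: "\<And>n. s (H n) \<ge> \<sigma> - e n"
  proof -
    fix n have "s (Fn n) \<le> s (H n)" by (rule smono[OF Hfin(1) Hfin(2)]) (auto simp: H_def)
    thus "s (H n) \<ge> \<sigma> - e n" using Fn[of n] by simp
  qed
  have pick: "\<And>G n. finite G \<Longrightarrow> G \<subseteq> I \<Longrightarrow> \<exists>y. y \<in> C G \<and> (norm y)^2 \<le> \<sigma> + e n"
  proof -
    fix G n assume G: "finite G" "G \<subseteq> I"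
    obtain y where "y \<in> C G" "(norm y)^2 < s G + e n" using sless[OF G epos] by blast
    thus "\<exists>y. y \<in> C G \<and> (norm y)^2 \<le> \<sigma> + e n" using ssig[OF G] by (intro exI[of _ y]) auto
  qed
  define y where "y = (\<lambda>n. SOME y. y \<in> C (H n) \<and> (norm y)^2 \<le> \<sigma> + e n)"
  have y: "\<And>n. y n \<in> C (H n) \<and> (norm (y n))^2 \<le> \<sigma> + e n"
    unfolding y_def by (rule someI_ex) (rule pick[OF Hfin])
  have Cmono: "\<And>F G. F \<subseteq> G \<Longrightarrow> C G \<subseteq> C F" by (auto simp: C_def)
  have ybd: "\<And>m n. n \<le> m \<Longrightarrow> norm (y m - y n) \<le> sqrt (8 * e n)"
  proof -
    fix m n :: nat assume nm: "n \<le> m"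
    have "y m \<in> C (H n)" using y[of m] Cmono[OF Hmono[OF nm]] by auto
    moreover have "(norm (y m))^2 \<le> \<sigma> + e n" using y[of m] emono[OF nm] by simp
    ultimately have "(norm (y m - y n))^2 \<le> 8 * e n"
      using key[OF Hfin(1) Hfin(2) Hs] y[of n] by blast
    then show "norm (y m - y n) \<le> sqrt (8 * e n)" by (rule sq_le_imp_le_sqrt)
  qed
  have slim: "(\<lambda>n. sqrt (8 * e n)) \<longlonglongrightarrow> 0"
    using tendsto_real_sqrt[OF tendsto_mult[OF tendsto_const elim, of 8]] by simp
  have "Cauchy y" by (rule cauchy_from_bound[OF ybd slim])
  then obtain yl where yl: "y \<longlonglongrightarrow> yl" using Cauchy_convergent_iff convergent_def by blast
  show ?thesis
  proof (intro exI ballI)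
    fix i assume iI: "i \<in> I"
    define z where "z = (\<lambda>n. SOME z. z \<in> C (insert i (H n)) \<and> (norm z)^2 \<le> \<sigma> + e n)"
    have z: "\<And>n. z n \<in> C (insert i (H n)) \<and> (norm (z n))^2 \<le> \<sigma> + e n"
      unfolding z_def by (rule someI_ex) (rule pick, use Hfin iI in auto)
    have zy: "\<And>n. norm (z n - y n) \<le> sqrt (8 * e n)"
    proof -
      fix n
      have "z n \<in> C (H n)" using z[of n] Cmono[of "H n" "insert i (H n)"] by auto
      then have "(norm (z n - y n))^2 \<le> 8 * e n"
        using key[OF Hfin(1) Hfin(2) Hs] y[of n] z[of n] by blast
      then show "norm (z n - y n) \<le> sqrt (8 * e n)" by (rule sq_le_imp_le_sqrt)
    qed
    have "(\<lambda>n. z n - y n) \<longlonglongrightarrow> 0"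
      by (rule Lim_null_comparison[OF _ slim]) (use zy in auto)
    then have "(\<lambda>n. (z n - y n) + y n) \<longlonglongrightarrow> 0 + yl" using yl by (intro tendsto_add)
    then have zl: "z \<longlonglongrightarrow> yl" by simp
    have "\<And>n. norm (z n - c i) \<le> r i" using z by (auto simp: C_def)
    moreover have "(\<lambda>n. norm (z n - c i)) \<longlonglongrightarrow> norm (yl - c i)" by (intro tendsto_intros zl)
    ultimately show "norm (yl - c i) \<le> r i" by (intro LIMSEQ_le_const2) auto
  qed
qed



lemma mono_pair:
  assumes "monotone_sv T" "v1 \<in> T u1" "v2 \<in> T u2"
  shows "inner (v1 - v2) (u1 - u2) \<ge> 0"
  using assms by (auto simp: monotone_sv_def gph_def)

lemma sum_diff_norm:
  fixes a b :: "'a::real_inner"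
  shows "(norm (a - b))^2 = (norm (a + b))^2 - 4 * inner a b"
  by (simp add: power2_norm_eq_inner inner_add_left inner_add_right inner_diff_left inner_diff_right inner_commute)

lemma norm_add_sq:
  fixes a b :: "'a::real_inner"
  shows "(norm (a + b))^2 = (norm a)^2 + 2 * inner a b + (norm b)^2"
  by (simp add: power2_norm_eq_inner inner_add_left inner_add_right inner_commute)

lemma minty:
  fixes T :: "'a::{real_inner,complete_space} \<Rightarrow> 'a set"
  assumes mm: "maximal_monotone T"
  shows "\<exists>u v. v \<in> T u \<and> u + v = x0"
proof -
  have mono: "monotone_sv T" using mm by (simp add: maximal_monotone_def)
  define I where "I = gph T"
  define c where "c = (\<lambda>p::'a\<times>'a. fst p - snd p)"
  define x where "x = (\<lambda>p::'a\<times>'a. fst p + snd p)"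
  have lip: "\<And>p q. p \<in> I \<Longrightarrow> q \<in> I \<Longrightarrow> norm (c p - c q) \<le> norm (x p - x q)"
  proof -
    fix p q assume "p \<in> I" "q \<in> I"
    then obtain u1 v1 u2 v2 where p: "p = (u1, v1)" "v1 \<in> T u1" and q: "q = (u2, v2)" "v2 \<in> T u2"
      by (auto simp: I_def gph_def)
    have m: "inner (u1 - u2) (v1 - v2) \<ge> 0" using mono_pair[OF mono p(2) q(2)] by (simp add: inner_commute)
    have "c p - c q = (u1 - u2) - (v1 - v2)" "x p - x q = (u1 - u2) + (v1 - v2)" by (auto simp: c_def x_def p q)
    then have "(norm (c p - c q))^2 \<le> (norm (x p - x q))^2" using sum_diff_norm[of "u1 - u2" "v1 - v2"] m by simp
    then show "norm (c p - c q) \<le> norm (x p - x q)" by (simp add: power_mono_iff)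
  qed
  obtain y where y: "\<And>p. p \<in> I \<Longrightarrow> norm (y - c p) \<le> norm (x p - x0)"
  proof -
    have "\<exists>y. \<forall>p\<in>I. norm (y - c p) \<le> norm (x p - x0)"
    proof (rule balls_fip)
      fix F assume "finite F" "F \<subseteq> I"
      then show "\<exists>y. \<forall>p\<in>F. norm (y - c p) \<le> norm (x p - x0)"
        by (intro kirsz_finite) (auto intro: lip)
    qed
    thus ?thesis using that by blast
  qed
  define a where "a = (1/2) *\<^sub>R (x0 + y)"
  define b where "b = (1/2) *\<^sub>R (x0 - y)"
  have rel: "\<And>u v. v \<in> T u \<Longrightarrow> inner (b - v) (a - u) \<ge> 0"
  proof -
    fix u v assume uv: "v \<in> T u"
    define P where "P = x0 - (u + v)"
    define Q where "Q = y - (u - v)"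
    have "norm Q \<le> norm P" using y[of "(u, v)"] uv by (auto simp: I_def gph_def c_def x_def P_def Q_def norm_minus_commute)
    then have PQ: "(norm Q)^2 \<le> (norm P)^2" by (simp add: power_mono)
    have ea: "a - u = (1/2) *\<^sub>R (P + Q)" by (simp add: a_def P_def Q_def algebra_simps scaleR_add_left[symmetric])
    have eb: "b - v = (1/2) *\<^sub>R (P - Q)" by (simp add: b_def P_def Q_def algebra_simps scaleR_add_left[symmetric])
    have "inner (b - v) (a - u) * 4 = (norm P)^2 - (norm Q)^2"
      unfolding ea eb by (simp add: power2_norm_eq_inner inner_add_left inner_add_right inner_diff_left inner_diff_right inner_commute)
    moreover have "(norm P)^2 - (norm Q)^2 \<ge> 0" using PQ by linarith
    ultimately show "inner (b - v) (a - u) \<ge> 0" by linarith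
  qed
  define S where "S = (\<lambda>z. if z = a then insert b (T a) else T z)"
  have gS: "gph S = insert (a, b) (gph T)" by (auto simp: S_def gph_def split: if_splits)
  have monoS: "monotone_sv S"
    unfolding monotone_sv_def gS
  proof (intro allI impI)
    fix u1 v1 u2 v2 assume p1: "(u1, v1) \<in> insert (a, b) (gph T)" and p2: "(u2, v2) \<in> insert (a, b) (gph T)"
    show "inner (v1 - v2) (u1 - u2) \<ge> 0"
    proof (cases "(u1, v1) = (a, b)")
      case True
      show ?thesis
      proof (cases "(u2, v2) = (a, b)")
        case True2: True thus ?thesis using True by simp
      next
        case False thus ?thesis using True p2 rel by (auto simp: gph_def)
      qed
    next
      case False
      show ?thesis
      proof (cases "(u2, v2) = (a, b)")
        case True
        have "v1 \<in> T u1" using False p1 by (auto simp: gph_def)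
        then have "inner (b - v1) (a - u1) \<ge> 0" by (rule rel)
        moreover have "inner (v1 - b) (u1 - a) = inner (b - v1) (a - u1)"
          by (simp add: inner_diff_left inner_diff_right)
        ultimately show ?thesis using True by simp
      next
        case False2: False
        thus ?thesis using False p1 p2 mono by (auto simp: gph_def monotone_sv_def)
      qed
    qed
  qed
  have "gph T \<subseteq> gph S" unfolding gS by auto
  then have "gph T = gph S" using mm monoS by (auto simp: maximal_monotone_def)
  then have "b \<in> T a" using gS by (auto simp: gph_def)
  moreover have "a + b = x0" by (simp add: a_def b_def algebra_simps scaleR_add_left[symmetric])
  ultimately show ?thesis by blast
qed

lemma maxmono_coder:
  fixes T :: "'a::{real_inner,complete_space} \<Rightarrow> 'a set"
  assumes mm: "maximal_monotone T" and uv: "(u, v) \<in> gph T" and zc: "z \<in> regular_coderivative T (u, v) w"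
  shows "inner z w \<ge> 0"
proof (rule ccontr)
  assume "\<not> ?thesis"
  then have zw: "inner z w < 0" by simp
  have mono: "monotone_sv T" using mm by (simp add: maximal_monotone_def)
  define h where "h = z - w"
  define nh where "nh = norm h"
  define k where "k = norm (z + w)"
  have "nh^2 - k^2 = - 4 * inner z w" unfolding nh_def k_def h_def
    by (simp add: power2_norm_eq_inner inner_add_left inner_add_right inner_diff_left inner_diff_right inner_commute)
  then have kk: "k^2 < nh^2" using zw by simp
  have knh: "k < nh" by (rule power2_less_imp_less[OF kk]) (simp add: nh_def)
  have k0: "k \<ge> 0" by (simp add: k_def)
  have nhpos: "nh > 0" using knh k0 by simp
  define \<gamma> where "\<gamma> = nh * (nh - k) / 2"
  have gpos: "\<gamma> > 0" using nhpos knh by (simp add: \<gamma>_def)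
  define \<epsilon> where "\<epsilon> = \<gamma> / (2 * nh)"
  have epos: "\<epsilon> > 0" using gpos nhpos by (simp add: \<epsilon>_def)
  have nc: "(z, - w) \<in> regular_normal_cone (u, v) (gph T)" using zc by (simp add: regular_coderivative_def)
  obtain \<delta> where dpos: "\<delta> > 0" and dn: "\<And>p. p \<in> gph T \<Longrightarrow> p \<noteq> (u, v) \<Longrightarrow> dist p (u, v) < \<delta> \<Longrightarrow>
      inner (z, - w) (p - (u, v)) \<le> \<epsilon> * norm (p - (u, v))"
    using normal_eps[OF nc epos] by blast
  define t where "t = \<delta> / (2 * nh)"
  have tpos: "t > 0" using dpos nhpos by (simp add: t_def)
  have tnh: "t * nh < \<delta>" using dpos nhpos by (simp add: t_def)
  obtain u' v' where uv': "v' \<in> T u'" and sum: "u' + v' = (u + v) + t *\<^sub>R h" using minty[OF mm] by blast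
  define du where "du = u' - u"
  define dv where "dv = v' - v"
  have dsum: "du + dv = t *\<^sub>R h" using sum by (simp add: du_def dv_def algebra_simps)
  have vT: "v \<in> T u" using uv by (simp add: gph_def)
  have "inner du dv = inner (v' - v) (u' - u)" unfolding du_def dv_def by (rule inner_commute)
  then have m: "inner du dv \<ge> 0" using mono_pair[OF mono uv' vT] by simp
  have nsum: "norm (du + dv) = t * nh" unfolding dsum nh_def using tpos by simp
  have pn: "(norm (du, dv))^2 \<le> (t * nh)^2"
  proof -
    have "(norm (du, dv))^2 = (norm du)^2 + (norm dv)^2" unfolding norm_Pair by simp
    also have "\<dots> = (norm (du + dv))^2 - 2 * inner du dv" unfolding norm_add_sq by simp
    finally show ?thesis using m nsum by simp
  qed
  have pn': "norm (du, dv) \<le> t * nh" by (rule power2_le_imp_le[OF pn]) (use tpos nhpos in simp)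
  have pdiff: "(u', v') - (u, v) = (du, dv)" by (simp add: du_def dv_def)
  have ne: "(u', v') \<noteq> (u, v)"
  proof
    assume "(u', v') = (u, v)"
    then have "t *\<^sub>R h = 0" using dsum by (simp add: du_def dv_def)
    then show False using tpos nhpos by (simp add: nh_def)
  qed
  have "dist (u', v') (u, v) < \<delta>" unfolding dist_norm pdiff using pn' tnh by linarith
  then have up: "inner z du - inner w dv \<le> \<epsilon> * norm (du, dv)"
    using dn[of "(u', v')"] uv' ne by (simp add: gph_def du_def dv_def)
  also have "\<dots> \<le> \<epsilon> * (t * nh)" using pn' epos by (intro mult_left_mono) auto
  also have "\<dots> = t * \<gamma> / 2" using nhpos by (simp add: \<epsilon>_def)
  finally have upper: "inner z du - inner w dv \<le> t * \<gamma> / 2" .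
  have iden: "2 * (inner z du - inner w dv) = t * nh^2 + inner (z + w) (du - dv)"
  proof -
    have "t * nh^2 = inner h (t *\<^sub>R h)" by (simp add: nh_def power2_norm_eq_inner)
    also have "\<dots> = inner (z - w) (du + dv)" by (simp add: dsum h_def)
    finally have "t * nh^2 = inner (z - w) (du + dv)" .
    then show ?thesis by (simp add: inner_add_left inner_add_right inner_diff_left inner_diff_right)
  qed
  have "(norm (du - dv))^2 \<le> (norm (du + dv))^2" using sum_diff_norm[of du dv] m by simp
  then have "(norm (du - dv))^2 \<le> (t * nh)^2" using nsum by simp
  then have ndd: "norm (du - dv) \<le> t * nh" by (rule power2_le_imp_le) (use tpos nhpos in simp)
  have "inner (z + w) (du - dv) \<ge> - (k * (t * nh))"
  proof -
    have "\<bar>inner (z + w) (du - dv)\<bar> \<le> k * norm (du - dv)" unfolding k_def by (rule Cauchy_Schwarz_ineq2)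
    also have "\<dots> \<le> k * (t * nh)" using ndd k0 by (intro mult_left_mono) auto
    finally show ?thesis by simp
  qed
  then have "2 * (inner z du - inner w dv) \<ge> t * nh^2 - k * (t * nh)" using iden by simp
  moreover have "t * nh^2 - k * (t * nh) = 2 * (t * \<gamma>)" by (simp add: \<gamma>_def power2_eq_square algebra_simps)
  ultimately have "inner z du - inner w dv \<ge> t * \<gamma>" by simp
  moreover have "t * \<gamma> / 2 < t * \<gamma>" using tpos gpos by simp
  ultimately show False using upper by linarith
qed



lemma quad_lb:
  fixes M d c :: real
  assumes "M > 0"
  shows "M * d^2 - c * d \<ge> - (c^2 / (4 * M))"
proof -
  have "0 \<le> (2 * M * d - c)^2" by simp
  also have "\<dots> = 4 * M * (M * d^2 - c * d) + c^2" by (simp add: power2_eq_square algebra_simps)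
  finally have h: "- (c^2) \<le> 4 * M * (M * d^2 - c * d)" by simp
  have "- (c^2 / (4 * M)) = (- (c^2)) / (4 * M)" by simp
  also have "\<dots> \<le> (4 * M * (M * d^2 - c * d)) / (4 * M)" using assms h by (intro divide_right_mono) auto
  also have "\<dots> = M * d^2 - c * d" using assms by simp
  finally show ?thesis .
qed

lemma seg_nearest:
  fixes aa bb y :: "'a::real_normed_vector"
  shows "\<exists>p\<in>closed_segment bb aa. infdist y (closed_segment bb aa) = dist y p \<and>
            (\<forall>q\<in>closed_segment bb aa. dist y p \<le> dist y q)"
proof -
  have "continuous_on (closed_segment bb aa) (\<lambda>p. dist y p)" by (intro continuous_intros)
  then obtain p where p: "p \<in> closed_segment bb aa" "\<And>q. q \<in> closed_segment bb aa \<Longrightarrow> dist y p \<le> dist y q"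
    using continuous_attains_inf[OF compact_segment, of bb aa "\<lambda>p. dist y p"] by auto
  have "infdist y (closed_segment bb aa) = dist y p"
  proof (rule antisym)
    show "infdist y (closed_segment bb aa) \<le> dist y p" by (rule infdist_le[OF p(1)])
    show "dist y p \<le> infdist y (closed_segment bb aa)"
      unfolding infdist_notempty[of "closed_segment bb aa", OF closed_segment_neq_empty] by (rule cINF_greatest) (auto intro: p(2))
  qed
  with p show ?thesis by blast
qed

lemma seg_param:
  fixes p x1 x2 :: "'a::real_normed_vector"
  assumes "p \<in> closed_segment x2 x1"
  obtains t where "0 \<le> t" "t \<le> 1" "p = x2 + t *\<^sub>R (x1 - x2)"
proof -
  obtain u where "0 \<le> u" "u \<le> 1" "p = (1 - u) *\<^sub>R x2 + u *\<^sub>R x1" using assms by (auto simp: in_segment)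
  moreover have "(1 - u) *\<^sub>R x2 + u *\<^sub>R x1 = x2 + u *\<^sub>R (x1 - x2)" by (simp add: algebra_simps)
  ultimately show ?thesis using that by auto
qed

lemma mvi:
  fixes g :: "'a::{real_inner,complete_space} \<Rightarrow> real"
  assumes lipg: "\<And>x y. \<bar>g x - g y\<bar> \<le> L * norm (x - y)"
    and sup: "\<And>x \<xi> K. (\<And>y. g y \<le> g x + inner \<xi> (y - x) + K * (norm (y - x))^2) \<Longrightarrow> norm \<xi> \<le> 1"
  shows "g x1 - g x2 \<le> norm (x1 - x2)"
proof (rule ccontr)
  assume "\<not> ?thesis"
  then have gt: "g x1 - g x2 > norm (x1 - x2)" by simp
  define s where "s = x1 - x2"
  have sne: "s \<noteq> 0" using gt by (auto simp: s_def)
  have ns: "norm s > 0" using sne by simp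
  have gts: "g x1 - g x2 > norm s" using gt by (simp add: s_def)
  have L0: "L \<ge> 0"
  proof -
    have "\<bar>g x1 - g x2\<bar> \<le> L * norm s" using lipg[of x1 x2] by (simp add: s_def)
    then have "0 < L * norm s" using gts ns by linarith
    then show ?thesis using ns by (simp add: zero_less_mult_iff)
  qed
  define k where "k = (1 + (g x1 - g x2) / norm s) / 2"
  have q1: "(g x1 - g x2) / norm s > 1" using gts ns by (simp add: less_divide_eq)
  have k1: "k > 1" using q1 by (simp add: k_def)
  define \<eta> where "\<eta> = g x1 - g x2 - k * norm s"
  have ksn: "k * norm s = (norm s + (g x1 - g x2)) / 2" using ns by (simp add: k_def field_simps)
  have etapos: "\<eta> > 0" using gts ksn by (simp add: \<eta>_def)
  define sh where "sh = (1 / norm s) *\<^sub>R s"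
  have nsh: "norm sh = 1" using ns by (simp add: sh_def)
  have shs: "inner sh s = norm s" using ns by (simp add: sh_def power2_norm_eq_inner[symmetric] power2_eq_square)
  define seg where "seg = closed_segment x2 x1"
  have convseg: "convex seg" by (simp add: seg_def)
  have x1seg: "x1 \<in> seg" "x2 \<in> seg" by (auto simp: seg_def)
  define M where "M = (L + k)^2 / \<eta> + 1"
  have Mpos: "M > 0" using etapos by (simp add: M_def add_nonneg_pos)
  have LkM: "(L + k)^2 / (4 * M) < \<eta>"
  proof -
    have e1: "(L + k)^2 = (M - 1) * \<eta>" using etapos by (simp add: M_def)
    have "(M - 1) * \<eta> < (4 * M) * \<eta>" using etapos Mpos by (intro mult_strict_right_mono) auto
    then have "(L + k)^2 < (4 * M) * \<eta>" using e1 by simp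
    then show ?thesis using Mpos by (simp add: divide_less_eq mult.commute)
  qed
  define F where "F = (\<lambda>y. - g y + k * inner sh (y - x2) + M * (infdist y seg)^2)"
  have seg_props: "\<And>p. p \<in> seg \<Longrightarrow> inner sh (p - x2) \<ge> 0 \<and> g p \<le> g x2 + L * norm s"
  proof -
    fix p assume "p \<in> seg"
    then obtain t where t: "0 \<le> t" "t \<le> 1" "p = x2 + t *\<^sub>R s" unfolding seg_def s_def by (rule seg_param)
    have "inner sh (p - x2) = t * norm s" using t shs by simp
    moreover have "g p - g x2 \<le> L * norm (p - x2)" using lipg[of p x2] by simp
    moreover have pn: "norm (p - x2) \<le> norm s" using t by (simp add: mult_left_le_one_le)
    moreover have "L * norm (p - x2) \<le> L * norm s" by (rule mult_left_mono[OF pn L0])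
    moreover have "t * norm s \<ge> 0" using t(1) by simp
    ultimately show "inner sh (p - x2) \<ge> 0 \<and> g p \<le> g x2 + L * norm s" by linarith
  qed
  have innb: "\<And>v. inner sh v \<ge> - norm v"
  proof -
    fix v
    have "\<bar>inner sh v\<bar> \<le> norm sh * norm v" by (rule Cauchy_Schwarz_ineq2)
    thus "inner sh v \<ge> - norm v" using nsh by simp
  qed
  have lowgen: "F y \<ge> - g p - (L + k) * norm (y - p) + k * inner sh (p - x2) + M * (norm (y - p))^2 - 0"
    if "infdist y seg = dist y p" "p \<in> seg" for y p
  proof -
    have h1: "g y - g p \<le> L * norm (y - p)" using lipg[of y p] by simp
    have "inner sh (y - x2) = inner sh (p - x2) + inner sh (y - p)" by (simp add: inner_diff_right)
    then have h2: "k * inner sh (y - x2) = k * inner sh (p - x2) + k * inner sh (y - p)" by (simp add: distrib_left)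
    have h3: "k * inner sh (y - p) \<ge> k * (- norm (y - p))" using k1 innb[of "y - p"] by (intro mult_left_mono) auto
    have "- g y + k * inner sh (y - x2) \<ge> - g p - (L + k) * norm (y - p) + k * inner sh (p - x2)"
      using h1 h2 h3 by (simp add: algebra_simps)
    then show ?thesis using that by (simp add: F_def dist_norm)
  qed
  have Flb: "\<And>y. F y \<ge> - g x2 - L * norm s - (L + k)^2 / (4 * M)"
  proof -
    fix y
    obtain p where p: "p \<in> seg" "infdist y seg = dist y p" using seg_nearest[where y=y and aa=x1 and bb=x2] by (auto simp: seg_def)
    have "F y \<ge> - g p - (L + k) * norm (y - p) + k * inner sh (p - x2) + M * (norm (y - p))^2 - 0"
      by (rule lowgen[OF p(2) p(1)])
    moreover have "M * (norm (y - p))^2 - (L + k) * norm (y - p) \<ge> - ((L + k)^2 / (4 * M))" by (rule quad_lb[OF Mpos])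
    moreover have "k * inner sh (p - x2) \<ge> 0" using seg_props[OF p(1)] k1 by simp
    moreover have "g p \<le> g x2 + L * norm s" using seg_props[OF p(1)] by simp
    ultimately show "F y \<ge> - g x2 - L * norm s - (L + k)^2 / (4 * M)" by linarith
  qed
  have contF: "continuous_on UNIV F"
  proof -
    have cg: "continuous_on UNIV g"
      unfolding continuous_on_iff
    proof (intro ballI allI impI)
      fix x e assume "(e::real) > 0"
      show "\<exists>d>0. \<forall>x'\<in>UNIV. dist x' x < d \<longrightarrow> dist (g x') (g x) < e"
      proof (intro exI[of _ "e / (L + 1)"] conjI ballI impI)
        show "e / (L + 1) > 0" using \<open>e > 0\<close> L0 by simp
        fix x' assume "dist x' x < e / (L + 1)"
        then have "(L + 1) * dist x' x < e" using L0 by (simp add: less_divide_eq mult.commute)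
        moreover have "\<bar>g x' - g x\<bar> \<le> L * dist x' x" using lipg[of x' x] by (simp add: dist_norm)
        moreover have "L * dist x' x \<le> (L + 1) * dist x' x" by (simp add: mult_right_mono)
        ultimately show "dist (g x') (g x) < e" by (simp add: dist_real_def)
      qed
    qed
    show ?thesis unfolding F_def by (intro continuous_intros cg)
  qed
  have Fx1: "F x1 = - g x2 - \<eta>" using x1seg shs by (simp add: F_def \<eta>_def s_def)
  obtain z0 where z0: "F z0 \<le> F x1" "\<And>w. F z0 \<le> F w + \<eta> / 2"
    using near_min_exists[of x1 UNIV "- g x2 - L * norm s - (L + k)^2 / (4 * M)" F "\<eta> / 2"] Flb etapos by auto
  define \<delta> where "\<delta> = 3 * (\<eta> / 2) / ((k - 1) / 2)"
  have dpos: "\<delta> > 0" using etapos k1 by (simp add: \<delta>_def)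
  have d3: "3 * (\<eta> / 2) / \<delta> = (k - 1) / 2" using etapos k1 by (simp add: \<delta>_def)
  have "\<exists>ys G M'. ys \<in> UNIV \<and> norm (ys - z0) \<le> \<delta> \<and> F ys \<le> F z0 \<and> norm G \<le> 3 * (\<eta> / 2) / \<delta> \<and> M' \<ge> 0 \<and>
           (\<forall>z\<in>UNIV. F ys \<le> F z + inner G (z - ys) + M' * (norm (z - ys))^2)"
    by (rule VP[of UNIV F "- g x2 - L * norm s - (L + k)^2 / (4 * M)" z0 "\<eta> / 2" \<delta>])
       (use contF Flb z0 etapos dpos in auto)
  then obtain ys G M' where ys: "F ys \<le> F z0" and Gn0: "norm G \<le> 3 * (\<eta> / 2) / \<delta>"
     and vp: "\<And>z. F ys \<le> F z + inner G (z - ys) + M' * (norm (z - ys))^2" by blast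
  have Gn: "norm G \<le> (k - 1) / 2" using Gn0 d3 by simp
  have Fys: "F ys \<le> - g x2 - \<eta>" using ys z0(1) Fx1 by simp
  obtain p where p: "p \<in> seg" "infdist ys seg = dist ys p" and pmin: "\<And>q. q \<in> seg \<Longrightarrow> dist ys p \<le> dist ys q"
    using seg_nearest[where y=ys and aa=x1 and bb=x2] by (auto simp: seg_def)
  show False
  proof (cases "p = x2")
    case True
    have "F ys \<ge> - g x2 - (L + k) * norm (ys - x2) + k * inner sh (x2 - x2) + M * (norm (ys - x2))^2 - 0"
      using lowgen[OF p(2) p(1)] True by simp
    moreover have "M * (norm (ys - x2))^2 - (L + k) * norm (ys - x2) \<ge> - ((L + k)^2 / (4 * M))" by (rule quad_lb[OF Mpos])
    ultimately have "F ys \<ge> - g x2 - (L + k)^2 / (4 * M)" by simp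
    with Fys LkM show False by linarith
  next
    case False
    obtain t where t: "0 \<le> t" "t \<le> 1" "p = x2 + t *\<^sub>R s" using p(1) unfolding seg_def s_def by (rule seg_param)
    have tpos: "t > 0" using t False by (cases "t = 0") auto
    have "inner (ys - p) (x2 - p) \<le> 0"
      by (rule proj_ineq[OF convseg p(1) x1seg(2)]) (use pmin in \<open>simp add: dist_norm\<close>)
    moreover have "x2 - p = - (t *\<^sub>R s)" using t by simp
    ultimately have "t * inner (ys - p) s \<ge> 0" by simp
    then have ip: "inner (ys - p) s \<ge> 0" using tpos by (simp add: zero_le_mult_iff)
    define \<xi> where "\<xi> = k *\<^sub>R sh + (2 * M) *\<^sub>R (ys - p) + G"
    have "norm \<xi> \<le> 1"
    proof (rule sup[of ys \<xi> "M + M'"])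
      fix y
      have a: "F ys = - g ys + k * inner sh (ys - x2) + M * (norm (ys - p))^2"
        using p(2) by (simp add: F_def dist_norm)
      have "infdist y seg \<le> norm (y - p)" using infdist_le[OF p(1), of y] by (simp add: dist_norm)
      then have "(infdist y seg)^2 \<le> (norm (y - p))^2" using infdist_nonneg by (intro power_mono) auto
      then have b: "F y \<le> - g y + k * inner sh (y - x2) + M * (norm (y - p))^2"
        using Mpos by (simp add: F_def)
      have c: "(norm (y - p))^2 = (norm (ys - p))^2 + 2 * inner (ys - p) (y - ys) + (norm (y - ys))^2"
      proof -
        have "y - p = (ys - p) + (y - ys)" by simp
        then show ?thesis by (metis norm_add_sq add.commute add.left_commute)
      qed
      have d: "inner sh (y - x2) = inner sh (ys - x2) + inner sh (y - ys)" by (simp add: inner_diff_right)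
      have e: "inner \<xi> (y - ys) = k * inner sh (y - ys) + 2 * M * inner (ys - p) (y - ys) + inner G (y - ys)"
        by (simp add: \<xi>_def inner_add_left)
      have c': "M * (norm (y - p))^2 = M * (norm (ys - p))^2 + 2 * M * inner (ys - p) (y - ys) + M * (norm (y - ys))^2"
        unfolding c by (simp add: distrib_left)
      have d': "k * inner sh (y - x2) = k * inner sh (ys - x2) + k * inner sh (y - ys)"
        unfolding d by (simp add: distrib_left)
      have f': "(M + M') * (norm (y - ys))^2 = M * (norm (y - ys))^2 + M' * (norm (y - ys))^2"
        by (simp add: distrib_right)
      from vp[of y] a b c' d' e f' show "g y \<le> g ys + inner \<xi> (y - ys) + (M + M') * (norm (y - ys))^2"
        by linarith
    qed
    moreover have "inner \<xi> sh \<ge> (k + 1) / 2"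
    proof -
      have "inner (ys - p) sh = inner (ys - p) s / norm s" by (simp add: sh_def)
      then have i1: "inner (ys - p) sh \<ge> 0" using ip ns by simp
      have i2: "inner G sh \<ge> - norm G" using innb[of G] by (simp add: inner_commute)
      have "inner \<xi> sh = k + 2 * M * inner (ys - p) sh + inner G sh"
        using nsh by (simp add: \<xi>_def inner_add_left power2_norm_eq_inner[symmetric])
      moreover have "2 * M * inner (ys - p) sh \<ge> 0" using i1 Mpos by simp
      ultimately show ?thesis using i2 Gn by argo
    qed
    moreover have "inner \<xi> sh \<le> norm \<xi>"
      using Cauchy_Schwarz_ineq2[of \<xi> sh] nsh by simp
    ultimately show False using k1 by argo
  qed
qed



lemma pair_lin:
  fixes du dv :: "'a::real_normed_vector"
  assumes "lam \<ge> 0"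
  shows "(norm (dv + lam *\<^sub>R du))^2 \<le> (1 + lam)^2 * (norm (du, dv))^2"
proof -
  have "norm (dv + lam *\<^sub>R du) \<le> norm dv + lam * norm du"
    using norm_triangle_ineq[of dv "lam *\<^sub>R du"] assms by simp
  also have "\<dots> \<le> norm (du, dv) + lam * norm (du, dv)"
    using norm_fst_le[of du dv] norm_snd_le[of dv du] assms by (intro add_mono mult_left_mono) auto
  also have "\<dots> = (1 + lam) * norm (du, dv)" by (simp add: algebra_simps)
  finally have "norm (dv + lam *\<^sub>R du) \<le> (1 + lam) * norm (du, dv)" .
  then have "(norm (dv + lam *\<^sub>R du))^2 \<le> ((1 + lam) * norm (du, dv))^2" by (intro power_mono) auto
  then show ?thesis by (simp add: power_mult_distrib)
qed

lemma suff_maxmono: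
  fixes T :: "'a::{real_inner,complete_space} \<Rightarrow> 'a set"
  assumes prp: "proper_sv T" and cl: "closed (gph T)" and hy: "hypomonotone T"
    and cod: "\<And>u v w z. (u, v) \<in> gph T \<Longrightarrow> z \<in> regular_coderivative T (u, v) w \<Longrightarrow> inner z w \<ge> 0"
  shows "maximal_monotone T"
proof -
  obtain r where r: "r > 0" and hm: "\<And>u1 v1 u2 v2. v1 \<in> T u1 \<Longrightarrow> v2 \<in> T u2 \<Longrightarrow>
      inner (v1 - v2) (u1 - u2) \<ge> - r * (norm (u1 - u2))^2"
    using hy by (auto simp: hypomonotone_def gph_def)
  define lam where "lam = r + 1"
  have lampos: "lam > 0" using r by (simp add: lam_def)
  have lipJ: "\<And>u1 v1 u2 v2. v1 \<in> T u1 \<Longrightarrow> v2 \<in> T u2 \<Longrightarrow>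
      norm (u1 - u2) \<le> norm ((v1 + lam *\<^sub>R u1) - (v2 + lam *\<^sub>R u2))"
  proof -
    fix u1 v1 u2 v2 assume h1: "v1 \<in> T u1" and h2: "v2 \<in> T u2"
    define du where "du = u1 - u2"
    define X where "X = (v1 + lam *\<^sub>R u1) - (v2 + lam *\<^sub>R u2)"
    have "v1 - v2 = X - lam *\<^sub>R du" by (simp add: X_def du_def algebra_simps)
    then have "inner (v1 - v2) (u1 - u2) = inner X du - lam * (norm du)^2"
      by (simp add: du_def inner_diff_left power2_norm_eq_inner)
    then have "inner X du - lam * (norm du)^2 \<ge> - r * (norm du)^2" using hm[OF h1 h2] by (simp add: du_def)
    then have a: "(norm du)^2 \<le> inner X du" by (simp add: lam_def algebra_simps)
    also have "\<dots> \<le> norm X * norm du" by (rule norm_cauchy_schwarz)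
    finally have b: "norm du * norm du \<le> norm X * norm du" by (simp add: power2_eq_square)
    show "norm (u1 - u2) \<le> norm ((v1 + lam *\<^sub>R u1) - (v2 + lam *\<^sub>R u2))"
    proof (cases "norm du = 0")
      case True thus ?thesis by (simp add: du_def)
    next
      case False
      then have "norm du > 0" by simp
      with b have "norm du \<le> norm X" by simp
      thus ?thesis by (simp add: du_def X_def)
    qed
  qed
  define Ds where "Ds = {x. \<exists>u v. v \<in> T u \<and> x = v + lam *\<^sub>R u}"
  have Dsne: "Ds \<noteq> {}" using prp by (auto simp: proper_sv_def dom_sv_def Ds_def)
  have Dscl: "closed Ds"
    unfolding closed_sequential_limits
  proof (intro allI impI)
    fix x l assume h: "(\<forall>n. x n \<in> Ds) \<and> x \<longlonglongrightarrow> l"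
    then have "\<forall>n. \<exists>u v. v \<in> T u \<and> x n = v + lam *\<^sub>R u" by (auto simp: Ds_def)
    then obtain U V where UV: "\<And>n. V n \<in> T (U n)" "\<And>n. x n = V n + lam *\<^sub>R U n" by metis
    have xC: "Cauchy x" using h by (auto intro: LIMSEQ_imp_Cauchy)
    have "Cauchy U"
    proof (rule CauchyI)
      fix e :: real assume "e > 0"
      from CauchyD[OF xC this] obtain M where M: "\<And>m n. m \<ge> M \<Longrightarrow> n \<ge> M \<Longrightarrow> norm (x m - x n) < e" by blast
      show "\<exists>M. \<forall>m\<ge>M. \<forall>n\<ge>M. norm (U m - U n) < e"
      proof (intro exI allI impI)
        fix m n assume "m \<ge> M" "n \<ge> M"
        then show "norm (U m - U n) < e" using lipJ[OF UV(1)[of m] UV(1)[of n]] M UV(2) by fastforce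
      qed
    qed
    then obtain ul where ul: "U \<longlonglongrightarrow> ul" using Cauchy_convergent_iff convergent_def by blast
    have "V = (\<lambda>n. x n - lam *\<^sub>R U n)" using UV(2) by (auto simp: algebra_simps)
    then have vl: "V \<longlonglongrightarrow> l - lam *\<^sub>R ul" using h ul by (auto intro!: tendsto_intros)
    have lim2: "(\<lambda>n. (U n, V n)) \<longlonglongrightarrow> (ul, l - lam *\<^sub>R ul)" by (intro tendsto_Pair ul vl)
    have ing: "\<And>n. (U n, V n) \<in> gph T" using UV(1) by (simp add: gph_def)
    have "(ul, l - lam *\<^sub>R ul) \<in> gph T"
      by (rule closed_sequentially[OF cl, of "\<lambda>n. (U n, V n)"]) (use lim2 ing in auto)
    then show "l \<in> Ds" unfolding Ds_def gph_def by (intro CollectI exI[of _ ul] exI[of _ "l - lam *\<^sub>R ul"]) auto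
  qed
  have DsU: "\<And>x0. x0 \<in> Ds"
  proof (rule ccontr)
    fix x0 assume x0: "x0 \<notin> Ds"
    have "open (- Ds)" using Dscl by auto
    then obtain \<rho> where rho: "\<rho> > 0" "ball x0 \<rho> \<subseteq> - Ds" using x0 open_contains_ball by blast
    have far: "\<And>y. y \<in> Ds \<Longrightarrow> norm (y - x0) \<ge> \<rho>"
    proof (rule ccontr)
      fix y assume "y \<in> Ds" "\<not> norm (y - x0) \<ge> \<rho>"
      then have "y \<in> ball x0 \<rho>" by (simp add: dist_norm norm_minus_commute)
      with rho \<open>y \<in> Ds\<close> show False by auto
    qed
    define f where "f = (\<lambda>y. (norm (y - x0))^2)"
    obtain y1 where y1: "y1 \<in> Ds" using Dsne by auto
    obtain y0 where y0: "y0 \<in> Ds" "\<And>w. w \<in> Ds \<Longrightarrow> f y0 \<le> f w + 1"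
      using near_min_exists[of y1 Ds 0 f 1] y1 by (auto simp: f_def)
    have "\<exists>ys G M. ys \<in> Ds \<and> norm (ys - y0) \<le> 3 / \<rho> \<and> f ys \<le> f y0 \<and> norm G \<le> 3 * 1 / (3 / \<rho>) \<and> M \<ge> 0 \<and>
           (\<forall>z\<in>Ds. f ys \<le> f z + inner G (z - ys) + M * (norm (z - ys))^2)"
      by (rule VP[of Ds f 0 y0 1 "3 / \<rho>"]) (use Dscl y0 rho in \<open>auto simp: f_def intro!: continuous_intros\<close>)
    then obtain ys G M where ysD: "ys \<in> Ds" and Gn0: "norm G \<le> 3 * 1 / (3 / \<rho>)" and M0: "M \<ge> 0"
      and vp: "\<And>z. z \<in> Ds \<Longrightarrow> f ys \<le> f z + inner G (z - ys) + M * (norm (z - ys))^2" by blast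
    have Gn: "norm G \<le> \<rho>" using Gn0 rho by simp
    define n where "n = 2 *\<^sub>R (x0 - ys) - G"
    have nn: "norm n \<ge> \<rho>"
    proof -
      have "norm (2 *\<^sub>R (x0 - ys)) = 2 * norm (ys - x0)" by (simp add: norm_minus_commute)
      moreover have "norm (2 *\<^sub>R (x0 - ys)) \<le> norm n + norm G"
        using norm_triangle_ineq[of n G] by (simp add: n_def)
      ultimately show ?thesis using far[OF ysD] Gn by linarith
    qed
    have nq: "\<And>z. z \<in> Ds \<Longrightarrow> inner n (z - ys) \<le> (1 + M) * (norm (z - ys))^2"
    proof -
      fix z assume zD: "z \<in> Ds"
      have "z - x0 = (z - ys) + (ys - x0)" by simp
      then have fz: "f z = f ys + 2 * inner (z - ys) (ys - x0) + (norm (z - ys))^2"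
        unfolding f_def by (metis norm_add_sq add.commute inner_commute)
      have "inner n (z - ys) = - 2 * inner (z - ys) (ys - x0) - inner G (z - ys)"
        by (simp add: n_def inner_diff_left inner_commute inner_diff_right)
      then show "inner n (z - ys) \<le> (1 + M) * (norm (z - ys))^2"
        using vp[OF zD] fz by (simp add: algebra_simps)
    qed
    obtain ub vb where vb: "vb \<in> T ub" and ysv: "ys = vb + lam *\<^sub>R ub" using ysD by (auto simp: Ds_def)
    have "(lam *\<^sub>R n, n) \<in> regular_normal_cone (ub, vb) (gph T)"
    proof (rule normal_of_quadratic[where C = "(1 + M) * (1 + lam)^2"])
      fix p assume "p \<in> gph T"
      then obtain u v where p: "p = (u, v)" "v \<in> T u" by (auto simp: gph_def)
      have zD: "v + lam *\<^sub>R u \<in> Ds" using p by (auto simp: Ds_def)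
      have eq: "v + lam *\<^sub>R u - ys = (v - vb) + lam *\<^sub>R (u - ub)" by (simp add: ysv algebra_simps)
      have "inner (lam *\<^sub>R n, n) (p - (ub, vb)) = inner n (v + lam *\<^sub>R u - ys)"
        unfolding eq p by (simp add: inner_add_right algebra_simps)
      also have "\<dots> \<le> (1 + M) * (norm (v + lam *\<^sub>R u - ys))^2" by (rule nq[OF zD])
      also have "\<dots> \<le> (1 + M) * ((1 + lam)^2 * (norm (u - ub, v - vb))^2)"
        unfolding eq using pair_lin[where lam=lam and du="u - ub" and dv="v - vb"] lampos M0 by (intro mult_left_mono) auto
      finally show "inner (lam *\<^sub>R n, n) (p - (ub, vb)) \<le> (1 + M) * (1 + lam)^2 * (norm (p - (ub, vb)))^2"
        by (simp add: p mult.assoc)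
    qed
    then have "lam *\<^sub>R n \<in> regular_coderivative T (ub, vb) (- n)" by (simp add: regular_coderivative_def)
    then have "inner (lam *\<^sub>R n) (- n) \<ge> 0" using cod[of ub vb "lam *\<^sub>R n" "- n"] vb by (simp add: gph_def)
    then have "lam * (norm n)^2 \<le> 0" by (simp add: power2_norm_eq_inner)
    then have "(norm n)^2 \<le> 0" using lampos by (simp add: mult_le_0_iff)
    then show False using nn rho by simp
  qed
  have ex: "\<And>x. \<exists>u. x - lam *\<^sub>R u \<in> T u"
  proof -
    fix x
    obtain u v where "v \<in> T u" "x = v + lam *\<^sub>R u" using DsU[of x] by (auto simp: Ds_def)
    then show "\<exists>u. x - lam *\<^sub>R u \<in> T u" by (intro exI[of _ u]) simp
  qed
  define J where "J = (\<lambda>x. SOME u. x - lam *\<^sub>R u \<in> T u)"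
  have JT: "\<And>x. x - lam *\<^sub>R J x \<in> T (J x)" unfolding J_def by (rule someI_ex[OF ex])
  have Juniq: "\<And>u v. v \<in> T u \<Longrightarrow> J (v + lam *\<^sub>R u) = u"
  proof -
    fix u v assume "v \<in> T u"
    from lipJ[OF JT[of "v + lam *\<^sub>R u"] this] show "J (v + lam *\<^sub>R u) = u" by simp
  qed
  have Jlip: "\<And>x y. norm (J x - J y) \<le> norm (x - y)"
  proof -
    fix x y from lipJ[OF JT[of x] JT[of y]] show "norm (J x - J y) \<le> norm (x - y)" by simp
  qed
  have mono: "monotone_sv T"
    unfolding monotone_sv_def gph_def
  proof (intro allI impI)
    fix u1 v1 u2 v2 assume "(u1, v1) \<in> {(u, v). v \<in> T u}" "(u2, v2) \<in> {(u, v). v \<in> T u}"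
    then have h1: "v1 \<in> T u1" and h2: "v2 \<in> T u2" by auto
    show "inner (v1 - v2) (u1 - u2) \<ge> 0"
    proof (rule ccontr)
      assume "\<not> ?thesis"
      then have neg: "inner (v1 - v2) (u1 - u2) < 0" by simp
      define x1 where "x1 = v1 + lam *\<^sub>R u1"
      define x2 where "x2 = v2 + lam *\<^sub>R u2"
      define R where "R = (\<lambda>x. (2 * lam) *\<^sub>R J x - x)"
      have R1: "R x1 = lam *\<^sub>R u1 - v1" using Juniq[OF h1] by (simp add: R_def x1_def algebra_simps scaleR_add_left[symmetric])
      have R2: "R x2 = lam *\<^sub>R u2 - v2" using Juniq[OF h2] by (simp add: R_def x2_def algebra_simps scaleR_add_left[symmetric])
      define du where "du = u1 - u2"
      define dv where "dv = v1 - v2"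
      have dR: "R x1 - R x2 = lam *\<^sub>R du - dv" by (simp add: R1 R2 du_def dv_def algebra_simps)
      have dx: "x1 - x2 = lam *\<^sub>R du + dv" by (simp add: x1_def x2_def du_def dv_def algebra_simps)
      have "(norm (R x1 - R x2))^2 = (norm (x1 - x2))^2 - 4 * inner (lam *\<^sub>R du) dv"
        unfolding dR dx by (rule sum_diff_norm)
      moreover have "inner (lam *\<^sub>R du) dv < 0"
      proof -
        have "inner du dv = inner (v1 - v2) (u1 - u2)" unfolding du_def dv_def by (rule inner_commute)
        then have "inner du dv < 0" using neg by simp
        then show ?thesis using lampos by (simp add: mult_pos_neg)
      qed
      ultimately have "(norm (x1 - x2))^2 < (norm (R x1 - R x2))^2" by simp
      then have big: "norm (x1 - x2) < norm (R x1 - R x2)" by (rule power2_less_imp_less) simp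
      then have nR: "norm (R x1 - R x2) > 0" using norm_ge_zero[of "x1 - x2"] by linarith
      define e where "e = (1 / norm (R x1 - R x2)) *\<^sub>R (R x1 - R x2)"
      have ne: "norm e = 1" using nR by (simp add: e_def)
      define g where "g = (\<lambda>x. inner e (R x))"
      have g12: "g x1 - g x2 = norm (R x1 - R x2)"
      proof -
        have "g x1 - g x2 = inner e (R x1 - R x2)" by (simp add: g_def inner_diff_right)
        also have "\<dots> = (1 / norm (R x1 - R x2)) * inner (R x1 - R x2) (R x1 - R x2)" by (simp add: e_def)
        also have "\<dots> = (1 / norm (R x1 - R x2)) * (norm (R x1 - R x2))^2" by (simp add: power2_norm_eq_inner)
        also have "\<dots> = norm (R x1 - R x2)" using nR by (simp add: power2_eq_square)
        finally show ?thesis .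
      qed
      have "g x1 - g x2 \<le> norm (x1 - x2)"
      proof (rule mvi[where L = "2 * lam + 1"])
        fix x y
        have "\<bar>g x - g y\<bar> = \<bar>inner e (R x - R y)\<bar>" by (simp add: g_def inner_diff_right)
        also have "\<dots> \<le> norm e * norm (R x - R y)" by (rule Cauchy_Schwarz_ineq2)
        also have "\<dots> = norm ((2 * lam) *\<^sub>R (J x - J y) - (x - y))" using ne by (simp add: R_def algebra_simps)
        also have "\<dots> \<le> 2 * lam * norm (J x - J y) + norm (x - y)"
          using norm_triangle_ineq4[of "(2 * lam) *\<^sub>R (J x - J y)" "x - y"] lampos by simp
        also have "\<dots> \<le> 2 * lam * norm (x - y) + norm (x - y)"
          using Jlip[of x y] lampos by simp
        finally show "\<bar>g x - g y\<bar> \<le> (2 * lam + 1) * norm (x - y)" by (simp add: algebra_simps)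
      next
        fix x \<xi> K assume H: "\<And>y. g y \<le> g x + inner \<xi> (y - x) + K * (norm (y - x))^2"
        obtain ub vb where vbT: "vb \<in> T ub" and xeq: "x = vb + lam *\<^sub>R ub" and Jx: "J x = ub"
        proof -
          have "x - lam *\<^sub>R J x \<in> T (J x)" "x = (x - lam *\<^sub>R J x) + lam *\<^sub>R J x" using JT by auto
          then show ?thesis using that by blast
        qed
        define q where "q = (lam *\<^sub>R (e - \<xi>), - (e + \<xi>))"
        have "q \<in> regular_normal_cone (ub, vb) (gph T)"
        proof (rule normal_of_quadratic[where C = "max K 0 * (1 + lam)^2"])
          fix p assume "p \<in> gph T"
          then obtain u v where p: "p = (u, v)" "v \<in> T u" by (auto simp: gph_def)
          define y where "y = v + lam *\<^sub>R u"
          have Jy: "J y = u" using Juniq[OF p(2)] by (simp add: y_def)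
          have yx: "y - x = (v - vb) + lam *\<^sub>R (u - ub)"
            unfolding y_def xeq by (simp add: algebra_simps)
          have Ry: "R y = lam *\<^sub>R u - v"
          proof -
            have "R y = (2 * lam) *\<^sub>R u - y" unfolding R_def using Jy by simp
            also have "\<dots> = lam *\<^sub>R u - v" by (simp add: y_def algebra_simps scaleR_add_left[symmetric])
            finally show ?thesis .
          qed
          have Rx: "R x = lam *\<^sub>R ub - vb"
          proof -
            have "R x = (2 * lam) *\<^sub>R ub - x" unfolding R_def using Jx by simp
            also have "\<dots> = lam *\<^sub>R ub - vb" unfolding xeq by (simp add: algebra_simps scaleR_add_left[symmetric])
            finally show ?thesis .
          qed
          have Ryx: "R y - R x = lam *\<^sub>R (u - ub) - (v - vb)" unfolding Ry Rx by (simp add: algebra_simps)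
          have pd: "p - (ub, vb) = (u - ub, v - vb)" using p by simp
          have L: "inner q (p - (ub, vb)) = lam * inner e (u - ub) - lam * inner \<xi> (u - ub) - inner e (v - vb) - inner \<xi> (v - vb)"
            unfolding pd q_def inner_Pair by (simp add: inner_diff_left inner_add_left right_diff_distrib)
          have Rr: "inner e (R y - R x) - inner \<xi> (y - x) = lam * inner e (u - ub) - lam * inner \<xi> (u - ub) - inner e (v - vb) - inner \<xi> (v - vb)"
            unfolding Ryx yx by (simp add: inner_diff_right inner_add_right)
          have "inner q (p - (ub, vb)) = inner e (R y - R x) - inner \<xi> (y - x)" using L Rr by linarith
          also have "\<dots> = g y - g x - inner \<xi> (y - x)" by (simp add: g_def inner_diff_right)
          also have "\<dots> \<le> K * (norm (y - x))^2" using H[of y] by simp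
          also have "\<dots> \<le> max K 0 * (norm (y - x))^2" by (intro mult_right_mono) auto
          also have "\<dots> \<le> max K 0 * ((1 + lam)^2 * (norm (u - ub, v - vb))^2)"
            unfolding yx using pair_lin[where lam=lam and du="u - ub" and dv="v - vb"] lampos by (intro mult_left_mono) auto
          finally show "inner q (p - (ub, vb)) \<le> max K 0 * (1 + lam)^2 * (norm (p - (ub, vb)))^2"
            by (simp add: p mult.assoc)
        qed
        then have "lam *\<^sub>R (e - \<xi>) \<in> regular_coderivative T (ub, vb) (e + \<xi>)"
          by (simp add: regular_coderivative_def q_def)
        then have ineq: "inner (lam *\<^sub>R (e - \<xi>)) (e + \<xi>) \<ge> 0" using cod[of ub vb "lam *\<^sub>R (e - \<xi>)" "e + \<xi>"] vbT by (simp add: gph_def)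
        have eqn: "inner (lam *\<^sub>R (e - \<xi>)) (e + \<xi>) = lam * ((norm e)^2 - (norm \<xi>)^2)"
        proof -
          have c: "inner \<xi> e = inner e \<xi>" by (rule inner_commute)
          show ?thesis by (simp add: power2_norm_eq_inner inner_diff_left inner_add_right c right_diff_distrib distrib_left)
        qed
        have "lam * ((norm e)^2 - (norm \<xi>)^2) \<ge> 0" using ineq eqn by linarith
        then have "(norm \<xi>)^2 \<le> (norm e)^2" using lampos by (simp add: zero_le_mult_iff)
        then have "(norm \<xi>)^2 \<le> 1^2" using ne by simp
        then show "norm \<xi> \<le> 1" by (rule power2_le_imp_le) simp
      qed
      with g12 big show False by simp
    qed
  qed
  have "\<forall>S. monotone_sv S \<and> gph T \<subseteq> gph S \<longrightarrow> gph T = gph S"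
  proof (intro allI impI)
    fix S assume S: "monotone_sv S \<and> gph T \<subseteq> gph S"
    show "gph T = gph S"
    proof
      show "gph T \<subseteq> gph S" using S by simp
      show "gph S \<subseteq> gph T"
      proof
        fix p assume pS: "p \<in> gph S"
        obtain a b where p: "p = (a, b)" by (cases p)
        define u' where "u' = J (b + lam *\<^sub>R a)"
        define v' where "v' = (b + lam *\<^sub>R a) - lam *\<^sub>R u'"
        have T': "v' \<in> T u'" using JT by (simp add: u'_def v'_def)
        then have "(u', v') \<in> gph S" using S by (auto simp: gph_def)
        then have "inner (b - v') (a - u') \<ge> 0" using S pS p by (auto simp: monotone_sv_def)
        moreover have "b - v' = lam *\<^sub>R (u' - a)" by (simp add: v'_def algebra_simps)
        moreover have "inner (lam *\<^sub>R (u' - a)) (a - u') = - lam * (norm (a - u'))^2"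
        proof -
          have e: "u' - a = - (a - u')" by simp
          have "inner (lam *\<^sub>R (u' - a)) (a - u') = lam * inner (- (a - u')) (a - u')" unfolding e by simp
          also have "\<dots> = - lam * (norm (a - u'))^2"
            by (simp only: inner_minus_left power2_norm_eq_inner mult_minus_right mult_minus_left)
          finally show ?thesis .
        qed
        ultimately have "- lam * (norm (a - u'))^2 \<ge> 0" by simp
        then have "(norm (a - u'))^2 \<le> 0" using lampos by (simp add: mult_le_0_iff)
        then have "a = u'" by simp
        then have "b = v'" by (simp add: v'_def)
        then show "p \<in> gph T" using T' p \<open>a = u'\<close> by (simp add: gph_def)
      qed
    qed
  qed
  then show ?thesis using mono by (simp add: maximal_monotone_def)
qed


theorem theorem3p2:
  fixes T :: "'a::{real_inner, complete_space} \<Rightarrow> 'a set"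
  assumes "proper_sv T"
    and "closed (gph T)"
  shows "maximal_monotone T \<longleftrightarrow>
           (hypomonotone T \<and>
            (\<forall>u v w z. (u, v) \<in> gph T \<longrightarrow> z \<in> regular_coderivative T (u, v) w
                \<longrightarrow> inner z w \<ge> 0))"
proof
  assume mm: "maximal_monotone T"
  have mono: "monotone_sv T" using mm by (simp add: maximal_monotone_def)
  have "hypomonotone T" unfolding hypomonotone_def
  proof (intro exI[of _ 1] conjI allI impI)
    fix u1 v1 u2 v2 :: 'a
    assume "(u1, v1) \<in> gph T" "(u2, v2) \<in> gph T"
    then have "inner (v1 - v2) (u1 - u2) \<ge> 0" using mono by (simp add: monotone_sv_def)
    moreover have "- 1 * (norm (u1 - u2))^2 \<le> 0" by simp
    ultimately show "inner (v1 - v2) (u1 - u2) \<ge> - 1 * (norm (u1 - u2))^2" by linarith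
  qed simp
  moreover have "\<forall>u v w z. (u, v) \<in> gph T \<longrightarrow> z \<in> regular_coderivative T (u, v) w \<longrightarrow> inner z w \<ge> 0"
    using maxmono_coder[OF mm] by blast
  ultimately show "hypomonotone T \<and>
            (\<forall>u v w z. (u, v) \<in> gph T \<longrightarrow> z \<in> regular_coderivative T (u, v) w
                \<longrightarrow> inner z w \<ge> 0)" by blast
next
  assume H: "hypomonotone T \<and>
            (\<forall>u v w z. (u, v) \<in> gph T \<longrightarrow> z \<in> regular_coderivative T (u, v) w
                \<longrightarrow> inner z w \<ge> 0)"
  show "maximal_monotone T"
    by (rule suff_maxmono[OF assms(1) assms(2)]) (use H in blast)+
qed

end
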